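(* Assume $\mathcal H$ is finite-dimensional and the gradients $\nabla f_i$ are globally Lipschitz continuous. Let $\alpha>0$ and $t_0>0$. Then for all $(u_0,v_0)\in\mathcal H\times\mathcal H$ there exist $T>t_0$ and an absolutely continuous function $(u(\cdot),v(\cdot)):[t_0,T]\to\mathcal H\times\mathcal H$ which solves the differential inclusion $$(\dot u(t),\dot v(t))\in G(t,u(t),v(t))\ \text{ for almost all } t\in(t_0,T],\qquad (u(t_0),v(t_0))=(u_0,v_0),$$ where $G(t,u,v)=\{v\}\times\big(-\frac{\alpha}{t}v-\arg\min_{g\in C(u)}\langle g,-v\rangle\big)$.
   Context: $\mathcal H$ is a real Hilbert space. $f_1,\dots,f_m:\mathcal H\to\mathbb R$ are convex and continuously differentiable. $C(u)=\operatorname{co}\{\nabla f_i(u):i=1,\dots,m\}$. *)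

theory Defs
  imports "HOL-Analysis.Analysis"
begin

definition abs_continuous_on ::
  "real \<Rightarrow> real \<Rightarrow> (real \<Rightarrow> 'b::real_normed_vector) \<Rightarrow> bool" where
  "abs_continuous_on a b f \<longleftrightarrow>
     (\<forall>\<epsilon>>0. \<exists>\<delta>>0. \<forall>(n::nat) (s::nat \<Rightarrow> real) (t::nat \<Rightarrow> real).
        (\<forall>k<n. a \<le> s k \<and> s k \<le> t k \<and> t k \<le> b) \<and>
        (\<forall>j<n. \<forall>k<n. j \<noteq> k \<longrightarrow> t j \<le> s k \<or> t k \<le> s j) \<and>
        (\<Sum>k<n. t k - s k) < \<delta>
        \<longrightarrow> (\<Sum>k<n. norm (f (t k) - f (s k))) < \<epsilon>)"

definition argmin_set :: "'a set \<Rightarrow> ('a \<Rightarrow> real) \<Rightarrow> 'a set" where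
  "argmin_set S \<phi> = {g \<in> S. \<forall>h\<in>S. \<phi> g \<le> \<phi> h}"

text \<open>C(u) = co { grad f_i(u) : i = 1..m }, where gf i is the gradient of f_i.\<close>
definition Cset :: "nat \<Rightarrow> (nat \<Rightarrow> 'a::real_inner \<Rightarrow> 'a) \<Rightarrow> 'a \<Rightarrow> 'a set" where
  "Cset m gf u = convex hull {gf i u | i. i \<in> {1..m}}"

definition Gmap :: "real \<Rightarrow> nat \<Rightarrow> (nat \<Rightarrow> 'a::real_inner \<Rightarrow> 'a) \<Rightarrow> real \<Rightarrow> 'a \<Rightarrow> 'a \<Rightarrow> ('a \<times> 'a) set" where
  "Gmap \<alpha> m gf t u v =
     {v} \<times> ((\<lambda>g. - ((\<alpha> / t) *\<^sub>R v) - g) ` argmin_set (Cset m gf u) (\<lambda>g. g \<bullet> (- v)))"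

end

theory Submission
  imports Defs "HOL-Complex_Analysis.Great_Picard"
begin

definition lowD :: "(real \<Rightarrow> real) \<Rightarrow> real \<Rightarrow> real \<Rightarrow> bool" where
  "lowD \<phi> x p \<longleftrightarrow> (\<forall>\<delta>>0. \<exists>c d. c < x \<and> x < d \<and> d - c < \<delta> \<and> \<phi> d - \<phi> c < p * (d - c))"

definition highD :: "(real \<Rightarrow> real) \<Rightarrow> real \<Rightarrow> real \<Rightarrow> bool" where
  "highD \<phi> x q \<longleftrightarrow> (\<forall>\<delta>>0. \<exists>c d. c < x \<and> x < d \<and> d - c < \<delta> \<and> \<phi> d - \<phi> c > q * (d - c))"

lemma emeasure_interval_measure_ball:
  fixes \<phi> :: "real \<Rightarrow> real"
  assumes mono: "mono \<phi>" and cont: "continuous_on UNIV \<phi>" and r: "0 < r"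
  shows "emeasure (interval_measure \<phi>) (ball c r) = ennreal (\<phi> (c + r) - \<phi> (c - r))"
proof -
  let ?M = "interval_measure \<phi>"
  have monoD': "\<And>x y. x \<le> y \<Longrightarrow> \<phi> x \<le> \<phi> y" using mono by (simp add: monoD)
  have Icc: "emeasure ?M {x..y} = ennreal (\<phi> y - \<phi> x)" if "x \<le> y" for x y
    using emeasure_interval_measure_Icc[OF that monoD' cont] by simp
  have sing: "emeasure ?M {x} = 0" for x
    using Icc[of x x] by simp
  have b: "ball c r = {c - r<..<c + r}" by (rule ball_eq_greaterThanLessThan)
  have "emeasure ?M (ball c r) \<le> emeasure ?M {c - r..c + r}"
    by (rule emeasure_mono) (auto simp: b)
  moreover have "emeasure ?M {c - r..c + r} \<le> emeasure ?M (ball c r \<union> ({c - r} \<union> {c + r}))"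
    by (rule emeasure_mono) (auto simp: b)
  moreover have "emeasure ?M (ball c r \<union> ({c - r} \<union> {c + r})) \<le> emeasure ?M (ball c r) + (emeasure ?M {c - r} + emeasure ?M {c + r})"
    by (intro order_trans[OF emeasure_subadditive] add_left_mono emeasure_subadditive) auto
  ultimately show ?thesis
    using Icc[of "c - r" "c + r"] r sing by (auto intro: antisym)
qed

lemma vitali_step:
  fixes \<phi> :: "real \<Rightarrow> real"
  assumes mono: "mono \<phi>" and cont: "continuous_on UNIV \<phi>" and pq: "0 < p" "p < q"
    and EO: "E \<subseteq> W" "open W"
    and lh: "\<And>x. x \<in> E \<Longrightarrow> lowD \<phi> x p \<and> highD \<phi> x q"
  shows "\<exists>O'. open O' \<and> O' \<subseteq> W \<and> ennreal q * emeasure lborel O' \<le> ennreal p * emeasure lborel W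
             \<and> negligible (E - O')"
proof -
  let ?M = "interval_measure \<phi>"
  let ?B = "\<lambda>i::real\<times>real. ball (fst i) (snd i)"
  have ballI: "\<exists>c' r'. 0 < r' \<and> r' < e \<and> x \<in> ball c' r' \<and> ball c' r' \<subseteq> ball x e \<and> \<phi> (c' + r') - \<phi> (c' - r') = \<phi> d - \<phi> c
                      \<and> 2 * r' = d - c"
    if "c < x" "x < d" "d - c < e" for c d x e :: real
  proof (intro exI conjI)
    show "0 < (d - c) / 2" "(d - c) / 2 < e" using that by auto
    show "x \<in> ball ((c + d) / 2) ((d - c) / 2)" using that by (auto simp: dist_real_def abs_if field_simps)
    show "ball ((c + d) / 2) ((d - c) / 2) \<subseteq> ball x e"
    proof
      fix y assume "y \<in> ball ((c + d) / 2) ((d - c) / 2)"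
      then have "c < y" "y < d" by (auto simp: dist_real_def abs_if field_simps split: if_splits)
      then show "y \<in> ball x e" using that by (auto simp: dist_real_def abs_if)
    qed
    show "\<phi> ((c + d) / 2 + (d - c) / 2) - \<phi> ((c + d) / 2 - (d - c) / 2) = \<phi> d - \<phi> c"
      by (simp add: field_simps)
  qed simp
  define K1 where "K1 = {i. 0 < snd i \<and> ?B i \<subseteq> W \<and> \<phi> (fst i + snd i) - \<phi> (fst i - snd i) < p * (2 * snd i)}"
  have cov1: "\<exists>i. i \<in> K1 \<and> x \<in> ?B i \<and> snd i < d" if x: "x \<in> E" and d: "0 < d" for x d
  proof -
    obtain e where e: "0 < e" "ball x e \<subseteq> W" using EO x open_contains_ball by blast
    obtain c d' where cd: "c < x" "x < d'" "d' - c < min e d" "\<phi> d' - \<phi> c < p * (d' - c)"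
      using lh[OF x] unfolding lowD_def using e d by (metis min_less_iff_conj)
    from ballI[OF cd(1,2) cd(3)] obtain c' r' where
      "0 < r'" "r' < min e d" "x \<in> ball c' r'" "ball c' r' \<subseteq> ball x (min e d)"
      "\<phi> (c' + r') - \<phi> (c' - r') = \<phi> d' - \<phi> c" "2 * r' = d' - c" by blast
    moreover have "ball x (min e d) \<subseteq> W" using e by auto
    ultimately have "(c', r') \<in> K1" using cd by (auto simp: K1_def)
    then show ?thesis using \<open>x \<in> ball c' r'\<close> \<open>r' < min e d\<close> by (intro exI[of _ "(c', r')"]) auto
  qed
  obtain C1 where C1: "countable C1" "C1 \<subseteq> K1" "pairwise (\<lambda>i j. disjnt (?B i) (?B j)) C1"
      "negligible (E - (\<Union>i\<in>C1. ?B i))"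
    by (rule Vitali_covering_theorem_balls[of E K1 fst snd]) (use cov1 in blast)
  define U1 where "U1 = (\<Union>i\<in>C1. ?B i)"
  have "open U1" by (auto simp: U1_def)
  have U1W: "U1 \<subseteq> W" using C1(2) by (auto simp: U1_def K1_def)
  define K2 where "K2 = {i. 0 < snd i \<and> ?B i \<subseteq> U1 \<and> \<phi> (fst i + snd i) - \<phi> (fst i - snd i) > q * (2 * snd i)}"
  have cov2: "\<exists>i. i \<in> K2 \<and> x \<in> ?B i \<and> snd i < d" if x: "x \<in> E \<inter> U1" and d: "0 < d" for x d
  proof -
    obtain e where e: "0 < e" "ball x e \<subseteq> U1" using \<open>open U1\<close> x open_contains_ball by blast
    obtain c d' where cd: "c < x" "x < d'" "d' - c < min e d" "\<phi> d' - \<phi> c > q * (d' - c)"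
      using lh x unfolding highD_def using e d by (metis IntD1 min_less_iff_conj)
    from ballI[OF cd(1,2) cd(3)] obtain c' r' where
      "0 < r'" "r' < min e d" "x \<in> ball c' r'" "ball c' r' \<subseteq> ball x (min e d)"
      "\<phi> (c' + r') - \<phi> (c' - r') = \<phi> d' - \<phi> c" "2 * r' = d' - c" by blast
    moreover have "ball x (min e d) \<subseteq> U1" using e by auto
    ultimately have "(c', r') \<in> K2" using cd by (auto simp: K2_def)
    then show ?thesis using \<open>x \<in> ball c' r'\<close> \<open>r' < min e d\<close> by (intro exI[of _ "(c', r')"]) auto
  qed
  obtain C2 where C2: "countable C2" "C2 \<subseteq> K2" "pairwise (\<lambda>i j. disjnt (?B i) (?B j)) C2"
      "negligible ((E \<inter> U1) - (\<Union>i\<in>C2. ?B i))"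
    by (rule Vitali_covering_theorem_balls[of "E \<inter> U1" K2 fst snd]) (use cov2 in blast)
  define U2 where "U2 = (\<Union>i\<in>C2. ?B i)"
  have U21: "U2 \<subseteq> U1" using C2(2) by (auto simp: U2_def K2_def)
  have disj1: "disjoint_family_on ?B C1"
    using C1(3) by (auto simp: disjoint_family_on_def pairwise_def disjnt_def)
  have disj2: "disjoint_family_on ?B C2"
    using C2(3) by (auto simp: disjoint_family_on_def pairwise_def disjnt_def)
  have mb: "emeasure ?M (?B i) = ennreal (\<phi> (fst i + snd i) - \<phi> (fst i - snd i))" if "0 < snd i" for i
    using emeasure_interval_measure_ball[OF mono cont that] by simp
  have lb: "emeasure lborel (?B i) = ennreal (2 * snd i)" if "0 < snd i" for i
    using that by (simp add: ball_eq_greaterThanLessThan emeasure_lborel_Ioo)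
  have M1: "emeasure ?M U1 = (\<integral>\<^sup>+ i. emeasure ?M (?B i) \<partial>count_space C1)"
    unfolding U1_def by (rule emeasure_UN_countable[OF _ C1(1) disj1]) auto
  have M2: "emeasure ?M U2 = (\<integral>\<^sup>+ i. emeasure ?M (?B i) \<partial>count_space C2)"
    unfolding U2_def by (rule emeasure_UN_countable[OF _ C2(1) disj2]) auto
  have L1: "emeasure lborel U1 = (\<integral>\<^sup>+ i. emeasure lborel (?B i) \<partial>count_space C1)"
    unfolding U1_def by (rule emeasure_UN_countable[OF _ C1(1) disj1]) auto
  have L2: "emeasure lborel U2 = (\<integral>\<^sup>+ i. emeasure lborel (?B i) \<partial>count_space C2)"
    unfolding U2_def by (rule emeasure_UN_countable[OF _ C2(1) disj2]) auto
  have "ennreal q * emeasure lborel U2 = (\<integral>\<^sup>+ i. ennreal q * emeasure lborel (?B i) \<partial>count_space C2)"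
    unfolding L2 by (rule nn_integral_cmult[symmetric]) simp
  also have "\<dots> \<le> (\<integral>\<^sup>+ i. emeasure ?M (?B i) \<partial>count_space C2)"
  proof (rule nn_integral_mono)
    fix i assume "i \<in> space (count_space C2)"
    then have i: "i \<in> K2" using C2(2) by auto
    then have "0 < snd i" by (simp add: K2_def)
    have "ennreal q * emeasure lborel (?B i) = ennreal (q * (2 * snd i))"
      using lb[OF \<open>0 < snd i\<close>] pq \<open>0 < snd i\<close> by (simp add: ennreal_mult)
    also have "\<dots> \<le> ennreal (\<phi> (fst i + snd i) - \<phi> (fst i - snd i))"
      using i by (intro ennreal_leI) (simp add: K2_def)
    finally show "ennreal q * emeasure lborel (?B i) \<le> emeasure ?M (?B i)"
      using mb[OF \<open>0 < snd i\<close>] by simp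
  qed
  also have "\<dots> = emeasure ?M U2" using M2 by simp
  also have "\<dots> \<le> emeasure ?M U1" by (rule emeasure_mono[OF U21]) (use \<open>open U1\<close> in simp)
  also have "\<dots> \<le> (\<integral>\<^sup>+ i. ennreal p * emeasure lborel (?B i) \<partial>count_space C1)"
    unfolding M1
  proof (rule nn_integral_mono)
    fix i assume "i \<in> space (count_space C1)"
    then have i: "i \<in> K1" using C1(2) by auto
    then have "0 < snd i" by (simp add: K1_def)
    have "emeasure ?M (?B i) = ennreal (\<phi> (fst i + snd i) - \<phi> (fst i - snd i))" by (rule mb[OF \<open>0 < snd i\<close>])
    also have "\<dots> \<le> ennreal (p * (2 * snd i))"
      using i by (intro ennreal_leI) (simp add: K1_def)
    also have "\<dots> = ennreal p * emeasure lborel (?B i)"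
      using lb[OF \<open>0 < snd i\<close>] pq \<open>0 < snd i\<close> by (simp add: ennreal_mult)
    finally show "emeasure ?M (?B i) \<le> ennreal p * emeasure lborel (?B i)" .
  qed
  also have "\<dots> = ennreal p * emeasure lborel U1"
    unfolding L1 by (rule nn_integral_cmult) simp
  also have "\<dots> \<le> ennreal p * emeasure lborel W"
    by (intro mult_left_mono emeasure_mono U1W) (use EO in auto)
  finally have meas: "ennreal q * emeasure lborel U2 \<le> ennreal p * emeasure lborel W" .
  have "E - U2 \<subseteq> (E - U1) \<union> ((E \<inter> U1) - U2)" by auto
  moreover have "negligible ((E - U1) \<union> ((E \<inter> U1) - U2))"
    using C1(4) C2(4) by (simp add: U1_def U2_def)
  ultimately have "negligible (E - U2)" by (rule negligible_subset[rotated])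
  moreover have "open U2" by (auto simp: U2_def)
  ultimately show ?thesis using meas U21 U1W by blast
qed

lemma negligible_lowhigh:
  fixes \<phi> :: "real \<Rightarrow> real"
  assumes mono: "mono \<phi>" and cont: "continuous_on UNIV \<phi>" and pq: "0 < p" "p < q"
    and ab: "a < b" and E: "E \<subseteq> {a<..<b}"
    and lh: "\<And>x. x \<in> E \<Longrightarrow> lowD \<phi> x p \<and> highD \<phi> x q"
  shows "negligible E"
proof -
  have "\<exists>V N. open V \<and> emeasure lborel V \<le> ennreal ((p / q) ^ k * (b - a)) \<and> negligible N \<and> E \<subseteq> V \<union> N" for k
  proof (induction k)
    case 0
    show ?case
      by (rule exI[of _ "{a<..<b}"], rule exI[of _ "{}"]) (use ab E in \<open>auto simp: emeasure_lborel_Ioo\<close>)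
  next
    case (Suc k)
    then obtain V N where ON: "open V" "emeasure lborel V \<le> ennreal ((p / q) ^ k * (b - a))"
      "negligible N" "E \<subseteq> V \<union> N" by blast
    obtain O' where O': "open O'" "ennreal q * emeasure lborel O' \<le> ennreal p * emeasure lborel V"
      "negligible ((E - N) - O')"
      using vitali_step[OF mono cont pq, of "E - N" V] ON(1,4) lh by blast
    have "emeasure lborel O' = ennreal (1 / q) * (ennreal q * emeasure lborel O')"
      using pq by (simp add: mult.assoc[symmetric] ennreal_mult[symmetric])
    also have "\<dots> \<le> ennreal (1 / q) * (ennreal p * emeasure lborel V)"
      by (rule mult_left_mono[OF O'(2)]) simp
    also have "\<dots> \<le> ennreal (1 / q) * (ennreal p * ennreal ((p / q) ^ k * (b - a)))"
      by (intro mult_left_mono ON(2)) auto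
    also have "\<dots> = ennreal (1 / q * (p * ((p / q) ^ k * (b - a))))"
    proof -
      have X: "0 \<le> (p / q) ^ k * (b - a)" using pq ab by simp
      have Y: "0 \<le> 1 / q" "0 \<le> p" using pq by auto
      show ?thesis using X Y mult_nonneg_nonneg[OF Y(2) X]
        by (subst ennreal_mult[OF Y(1) mult_nonneg_nonneg[OF Y(2) X]], subst ennreal_mult[OF Y(2) X]) (rule refl)
    qed
    also have "\<dots> = ennreal ((p / q) ^ Suc k * (b - a))"
      using pq by (intro arg_cong[where f=ennreal]) (simp add: field_simps)
    finally have "emeasure lborel O' \<le> ennreal ((p / q) ^ Suc k * (b - a))" .
    moreover have "negligible (N \<union> ((E - N) - O'))" using ON(3) O'(3) by simp
    moreover have "E \<subseteq> O' \<union> (N \<union> ((E - N) - O'))" by auto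
    ultimately show ?case using O'(1) by blast
  qed
  then obtain Of Nf where ON: "\<And>k. open (Of k)" "\<And>k. emeasure lborel (Of k) \<le> ennreal ((p / q) ^ k * (b - a))"
      "\<And>k. negligible (Nf k)" "\<And>k. E \<subseteq> Of k \<union> Nf k"
    by metis
  define Z where "Z = (\<Inter>k. Of k)"
  have Zs: "Z \<in> sets lborel" unfolding Z_def using ON(1) by auto
  have Zle: "emeasure lborel Z \<le> 0 + ennreal e" if "0 < e" for e
  proof -
    obtain k where k: "(p / q) ^ k < e / (b - a)"
      using real_arch_pow_inv[of "e / (b - a)" "p / q"] pq ab \<open>0 < e\<close> by auto
    have "emeasure lborel Z \<le> emeasure lborel (Of k)"
      by (rule emeasure_mono) (auto simp: Z_def ON(1))
    also have "\<dots> \<le> ennreal ((p / q) ^ k * (b - a))" by (rule ON(2))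
    also have "\<dots> \<le> ennreal e"
      using k ab by (intro ennreal_leI) (simp add: field_simps)
    finally show ?thesis by simp
  qed
  have "emeasure lborel Z \<le> 0" by (rule ennreal_le_epsilon) (rule Zle)
  then have "Z \<in> null_sets lborel" using Zs by (auto intro: null_setsI)
  then have "negligible Z" by (simp add: negligible_iff_null_sets null_sets_completionI)
  moreover have "negligible (\<Union>k. Nf k)"
    by (rule negligible_countable_Union) (auto simp: ON(3))
  ultimately have "negligible (Z \<union> (\<Union>k. Nf k))" by simp
  moreover have "E \<subseteq> Z \<union> (\<Union>k. Nf k)"
  proof
    fix x assume "x \<in> E"
    show "x \<in> Z \<union> (\<Union>k. Nf k)"
    proof (cases "\<exists>k. x \<in> Nf k")
      case False
      then show ?thesis using ON(4) \<open>x \<in> E\<close> by (auto simp: Z_def)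
    qed auto
  qed
  ultimately show ?thesis by (rule negligible_subset)
qed

lemma lowD_nonpos:
  fixes \<phi> :: "real \<Rightarrow> real"
  assumes "mono \<phi>" "p \<le> 0"
  shows "\<not> lowD \<phi> x p"
proof
  assume "lowD \<phi> x p"
  then obtain c d where "c < x" "x < d" "\<phi> d - \<phi> c < p * (d - c)"
    unfolding lowD_def by (meson zero_less_one)
  moreover have "\<phi> c \<le> \<phi> d" using assms(1) \<open>c < x\<close> \<open>x < d\<close> by (simp add: monoD)
  moreover have "p * (d - c) \<le> 0" using assms(2) \<open>c < x\<close> \<open>x < d\<close> by (simp add: mult_nonpos_nonneg)
  ultimately show False by simp
qed

lemma le_of_small:
  fixes A B K s :: real
  assumes "0 < s" "\<And>\<eta>. 0 < \<eta> \<Longrightarrow> \<eta> < s \<Longrightarrow> A \<le> B + K * \<eta>"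
  shows "A \<le> B"
proof (rule ccontr)
  assume "\<not> A \<le> B"
  define \<eta> where "\<eta> = min (s / 2) ((A - B) / (2 * (\<bar>K\<bar> + 1)))"
  have "0 < \<eta>" "\<eta> < s" using assms(1) \<open>\<not> A \<le> B\<close> by (auto simp: \<eta>_def)
  have "K * \<eta> \<le> \<bar>K\<bar> * \<eta>" using \<open>0 < \<eta>\<close> by (simp add: mult_right_mono)
  also have "\<dots> \<le> \<bar>K\<bar> * ((A - B) / (2 * (\<bar>K\<bar> + 1)))"
    by (rule mult_left_mono) (auto simp: \<eta>_def)
  also have "\<dots> = (A - B) * (\<bar>K\<bar> / (2 * (\<bar>K\<bar> + 1)))" by (simp only: times_divide_eq_right mult.commute)
  also have "\<dots> < (A - B) * 1"
  proof (rule mult_strict_left_mono)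
    have p: "0 < 2 * (\<bar>K\<bar> + 1)" by simp
    have "\<bar>K\<bar> < 1 * (2 * (\<bar>K\<bar> + 1))" by simp
    then show "\<bar>K\<bar> / (2 * (\<bar>K\<bar> + 1)) < 1" using p by (simp only: divide_less_eq_1_pos)
    show "0 < A - B" using \<open>\<not> A \<le> B\<close> by simp
  qed
  also have "\<dots> = A - B" by simp
  finally show False using assms(2)[OF \<open>0 < \<eta>\<close> \<open>\<eta> < s\<close>] by simp
qed

lemma diff_from_lowhigh:
  fixes \<phi> :: "real \<Rightarrow> real"
  assumes mono: "mono \<phi>" and lip: "\<And>x y. \<bar>\<phi> x - \<phi> y\<bar> \<le> L * \<bar>x - y\<bar>"
    and nolh: "\<And>p q. p \<in> \<rat> \<Longrightarrow> q \<in> \<rat> \<Longrightarrow> 0 < p \<Longrightarrow> p < q \<Longrightarrow> \<not> (lowD \<phi> x p \<and> highD \<phi> x q)"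
  shows "\<phi> differentiable (at x)"
proof -
  have monoD': "\<phi> c \<le> \<phi> d" if "c \<le> d" for c d using mono that by (simp add: monoD)
  have noLow: "\<not> lowD \<phi> x p" if "p \<in> \<rat>" "q \<in> \<rat>" "p < q" "highD \<phi> x q" for p q
  proof (cases "0 < p")
    case True then show ?thesis using nolh[OF that(1,2) True that(3)] that(4) by blast
  next
    case False then show ?thesis using lowD_nonpos[OF mono] by simp
  qed
  define H where "H = {q. highD \<phi> x q}"
  have highmono: "highD \<phi> x q" if hq: "highD \<phi> x q2" "q \<le> q2" for q q2
    unfolding highD_def
  proof (intro allI impI)
    fix \<delta> :: real assume "0 < \<delta>"
    then obtain c d where "c < x" "x < d" "d - c < \<delta>" "\<phi> d - \<phi> c > q2 * (d - c)"
      using hq(1) unfolding highD_def by blast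
    moreover have "q * (d - c) \<le> q2 * (d - c)" using hq(2) \<open>c < x\<close> \<open>x < d\<close> by (simp add: mult_right_mono)
    ultimately show "\<exists>c d. c < x \<and> x < d \<and> d - c < \<delta> \<and> q * (d - c) < \<phi> d - \<phi> c"
      by (meson order_le_less_trans)
  qed
  have "-1 \<in> H" unfolding H_def highD_def
  proof (intro CollectI allI impI)
    fix \<delta> :: real assume "0 < \<delta>"
    have "\<phi> (x - \<delta>/4) \<le> \<phi> (x + \<delta>/4)" using \<open>0 < \<delta>\<close> by (intro monoD') simp
    then show "\<exists>c d. c < x \<and> x < d \<and> d - c < \<delta> \<and> - 1 * (d - c) < \<phi> d - \<phi> c"
      using \<open>0 < \<delta>\<close> by (intro exI[of _ "x - \<delta>/4"] exI[of _ "x + \<delta>/4"]) auto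
  qed
  then have Hne: "H \<noteq> {}" by auto
  have Hbdd: "q \<le> L" if hq: "q \<in> H" for q
  proof (rule ccontr)
    assume "\<not> q \<le> L"
    have "highD \<phi> x q" using hq by (simp add: H_def)
    then obtain c d where "c < x" "x < d" "\<phi> d - \<phi> c > q * (d - c)"
      unfolding highD_def using zero_less_one by blast
    moreover have "\<phi> d - \<phi> c \<le> L * (d - c)"
    proof -
      have "\<phi> d - \<phi> c \<le> \<bar>\<phi> d - \<phi> c\<bar>" by (rule abs_ge_self)
      also have "\<dots> \<le> L * \<bar>d - c\<bar>" by (rule lip)
      also have "\<bar>d - c\<bar> = d - c" using \<open>c < x\<close> \<open>x < d\<close> by simp
      finally show ?thesis .
    qed
    moreover have "L * (d - c) \<le> q * (d - c)" using \<open>\<not> q \<le> L\<close> \<open>c < x\<close> \<open>x < d\<close> by (simp add: mult_right_mono)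
    ultimately show False by simp
  qed
  then have bdd: "bdd_above H" unfolding bdd_above_def by blast
  define D where "D = Sup H"
  have upper: "\<exists>\<delta>>0. \<forall>c d. c < x \<and> x < d \<and> d - c < \<delta> \<longrightarrow> \<phi> d - \<phi> c \<le> (D + \<epsilon>) * (d - c)"
    if "0 < \<epsilon>" for \<epsilon>
  proof -
    have "D + \<epsilon> \<notin> H"
    proof
      assume "D + \<epsilon> \<in> H"
      then have "D + \<epsilon> \<le> D" unfolding D_def using bdd by (rule cSup_upper)
      with that show False by simp
    qed
    then have "\<not> highD \<phi> x (D + \<epsilon>)" by (simp add: H_def)
    then obtain \<delta> where "\<delta> > 0" "\<forall>c d. c < x \<and> x < d \<and> d - c < \<delta> \<longrightarrow> \<not> ((D + \<epsilon>) * (d - c) < \<phi> d - \<phi> c)"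
      unfolding highD_def by blast
    then show ?thesis by (meson not_less)
  qed
  have lower: "\<exists>\<delta>>0. \<forall>c d. c < x \<and> x < d \<and> d - c < \<delta> \<longrightarrow> (D - \<epsilon>) * (d - c) \<le> \<phi> d - \<phi> c"
    if eps: "0 < \<epsilon>" for \<epsilon>
  proof -
    obtain p where p: "p \<in> \<rat>" "D - \<epsilon> < p" "p < D" using Rats_dense_in_real[of "D - \<epsilon>" D] eps by auto
    obtain q where q: "q \<in> \<rat>" "p < q" "q < D" using Rats_dense_in_real[of p D] p by auto
    obtain q2 where "q2 \<in> H" "q < q2" using q(3) less_cSup_iff[OF Hne bdd] unfolding D_def by auto
    then have "highD \<phi> x q" using highmono[of q2 q] by (auto simp: H_def)
    then have "\<not> lowD \<phi> x p" using noLow[OF p(1) q(1) q(2)] by simp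
    then obtain \<delta> where \<delta>: "\<delta> > 0" "\<forall>c d. c < x \<and> x < d \<and> d - c < \<delta> \<longrightarrow> \<not> (\<phi> d - \<phi> c < p * (d - c))"
      unfolding lowD_def by blast
    show ?thesis
    proof (intro exI[of _ \<delta>] conjI allI impI)
      fix c d assume cd: "c < x \<and> x < d \<and> d - c < \<delta>"
      have "(D - \<epsilon>) * (d - c) \<le> p * (d - c)" using p(2) cd by (simp add: mult_right_mono)
      also have "\<dots> \<le> \<phi> d - \<phi> c" using \<delta>(2) cd by (meson not_less)
      finally show "(D - \<epsilon>) * (d - c) \<le> \<phi> d - \<phi> c" .
    qed (use \<delta> in auto)
  qed
  have "(\<phi> has_real_derivative D) (at x)"
    unfolding DERIV_def LIM_eq
  proof (intro allI impI)
    fix r :: real assume "0 < r"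
    define \<epsilon> where "\<epsilon> = r / 2"
    have "0 < \<epsilon>" using \<open>0 < r\<close> by (simp add: \<epsilon>_def)
    obtain \<delta>1 where \<delta>1: "\<delta>1 > 0" "\<And>c d. c < x \<Longrightarrow> x < d \<Longrightarrow> d - c < \<delta>1 \<Longrightarrow> \<phi> d - \<phi> c \<le> (D + \<epsilon>) * (d - c)"
      using upper[OF \<open>0 < \<epsilon>\<close>] by blast
    obtain \<delta>2 where \<delta>2: "\<delta>2 > 0" "\<And>c d. c < x \<Longrightarrow> x < d \<Longrightarrow> d - c < \<delta>2 \<Longrightarrow> (D - \<epsilon>) * (d - c) \<le> \<phi> d - \<phi> c"
      using lower[OF \<open>0 < \<epsilon>\<close>] by blast
    define s where "s = min \<delta>1 \<delta>2 / 2"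
    have "0 < s" using \<delta>1 \<delta>2 by (simp add: s_def)
    have L0: "0 \<le> L" using lip[of 1 0] by simp
    have bnd: "(D - \<epsilon>) * \<bar>h\<bar> \<le> (if 0 < h then \<phi> (x + h) - \<phi> x else \<phi> x - \<phi> (x + h))
             \<and> (if 0 < h then \<phi> (x + h) - \<phi> x else \<phi> x - \<phi> (x + h)) \<le> (D + \<epsilon>) * \<bar>h\<bar>"
      if h: "h \<noteq> 0" "\<bar>h\<bar> < s" for h
    proof (cases "0 < h")
      case True
      have A: "\<phi> (x + h) - \<phi> x \<le> (D + \<epsilon>) * h + (D + \<epsilon>) * \<eta>" and
           B: "(D - \<epsilon>) * h \<le> \<phi> (x + h) - \<phi> x + (L - (D - \<epsilon>)) * \<eta>"
        if "0 < \<eta>" "\<eta> < s" for \<eta>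
      proof -
        have i: "x - \<eta> < x" "x < x + h" "(x + h) - (x - \<eta>) < \<delta>1" "(x + h) - (x - \<eta>) < \<delta>2"
          using that h True by (auto simp: s_def)
        have u: "\<phi> (x + h) - \<phi> (x - \<eta>) \<le> (D + \<epsilon>) * (h + \<eta>)" using \<delta>1(2)[OF i(1,2,3)] by simp
        have l: "(D - \<epsilon>) * (h + \<eta>) \<le> \<phi> (x + h) - \<phi> (x - \<eta>)" using \<delta>2(2)[OF i(1,2,4)] by simp
        have m: "\<phi> (x - \<eta>) \<le> \<phi> x" using that by (intro monoD') simp
        have lp: "\<phi> x - \<phi> (x - \<eta>) \<le> L * \<eta>" using lip[of x "x - \<eta>"] that by simp
        show "\<phi> (x + h) - \<phi> x \<le> (D + \<epsilon>) * h + (D + \<epsilon>) * \<eta>" using u m by (simp add: algebra_simps)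
        show "(D - \<epsilon>) * h \<le> \<phi> (x + h) - \<phi> x + (L - (D - \<epsilon>)) * \<eta>" using l lp by (simp add: algebra_simps)
      qed
      have "\<phi> (x + h) - \<phi> x \<le> (D + \<epsilon>) * h" by (rule le_of_small[OF \<open>0 < s\<close> A])
      moreover have "(D - \<epsilon>) * h \<le> \<phi> (x + h) - \<phi> x" by (rule le_of_small[OF \<open>0 < s\<close> B])
      ultimately show ?thesis using True by simp
    next
      case False
      then have hn: "h < 0" using h by simp
      have A: "\<phi> x - \<phi> (x + h) \<le> (D + \<epsilon>) * (- h) + (D + \<epsilon>) * \<eta>" and
           B: "(D - \<epsilon>) * (- h) \<le> \<phi> x - \<phi> (x + h) + (L - (D - \<epsilon>)) * \<eta>"
        if "0 < \<eta>" "\<eta> < s" for \<eta>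
      proof -
        have i: "x + h < x" "x < x + \<eta>" "(x + \<eta>) - (x + h) < \<delta>1" "(x + \<eta>) - (x + h) < \<delta>2"
          using that h hn by (auto simp: s_def)
        have u: "\<phi> (x + \<eta>) - \<phi> (x + h) \<le> (D + \<epsilon>) * (\<eta> - h)" using \<delta>1(2)[OF i(1,2,3)] by simp
        have l: "(D - \<epsilon>) * (\<eta> - h) \<le> \<phi> (x + \<eta>) - \<phi> (x + h)" using \<delta>2(2)[OF i(1,2,4)] by simp
        have m: "\<phi> x \<le> \<phi> (x + \<eta>)" using that by (intro monoD') simp
        have lp: "\<phi> (x + \<eta>) - \<phi> x \<le> L * \<eta>" using lip[of "x + \<eta>" x] that by simp
        show "\<phi> x - \<phi> (x + h) \<le> (D + \<epsilon>) * (- h) + (D + \<epsilon>) * \<eta>" using u m by (simp add: algebra_simps)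
        show "(D - \<epsilon>) * (- h) \<le> \<phi> x - \<phi> (x + h) + (L - (D - \<epsilon>)) * \<eta>" using l lp by (simp add: algebra_simps)
      qed
      have "\<phi> x - \<phi> (x + h) \<le> (D + \<epsilon>) * (- h)" by (rule le_of_small[OF \<open>0 < s\<close> A])
      moreover have "(D - \<epsilon>) * (- h) \<le> \<phi> x - \<phi> (x + h)" by (rule le_of_small[OF \<open>0 < s\<close> B])
      ultimately show ?thesis using hn by simp
    qed
    show "\<exists>s>0. \<forall>h. h \<noteq> 0 \<and> norm (h - 0) < s \<longrightarrow> norm ((\<phi> (x + h) - \<phi> x) / h - D) < r"
    proof (intro exI[of _ s] conjI allI impI)
      fix h :: real assume "h \<noteq> 0 \<and> norm (h - 0) < s"
      then have h: "h \<noteq> 0" "\<bar>h\<bar> < s" by auto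
      have "\<bar>(\<phi> (x + h) - \<phi> x) / h - D\<bar> \<le> \<epsilon>"
      proof (cases "0 < h")
        case True
        then have "(D - \<epsilon>) * h \<le> \<phi> (x + h) - \<phi> x" "\<phi> (x + h) - \<phi> x \<le> (D + \<epsilon>) * h"
          using bnd[OF h] by auto
        then have "D - \<epsilon> \<le> (\<phi> (x + h) - \<phi> x) / h" "(\<phi> (x + h) - \<phi> x) / h \<le> D + \<epsilon>"
          using True by (simp_all add: pos_le_divide_eq pos_divide_le_eq)
        then show ?thesis by (simp add: abs_le_iff)
      next
        case False
        then have hn: "h < 0" using h by simp
        then have "(D - \<epsilon>) * (- h) \<le> \<phi> x - \<phi> (x + h)" "\<phi> x - \<phi> (x + h) \<le> (D + \<epsilon>) * (- h)"
          using bnd[OF h] by auto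
        then have "(D + \<epsilon>) * h \<le> \<phi> (x + h) - \<phi> x" "\<phi> (x + h) - \<phi> x \<le> (D - \<epsilon>) * h"
          by (simp_all add: algebra_simps)
        then have "D - \<epsilon> \<le> (\<phi> (x + h) - \<phi> x) / h" "(\<phi> (x + h) - \<phi> x) / h \<le> D + \<epsilon>"
          using hn by (simp_all add: neg_le_divide_eq neg_divide_le_eq)
        then show ?thesis by (simp add: abs_le_iff)
      qed
      then show "norm ((\<phi> (x + h) - \<phi> x) / h - D) < r" using \<open>0 < r\<close> by (simp add: \<epsilon>_def)
    qed (use \<open>0 < s\<close> in auto)
  qed
  then show ?thesis using real_differentiable_def by blast
qed

lemma scalar_ae_diff:
  fixes \<phi> :: "real \<Rightarrow> real"
  assumes mono: "mono \<phi>" and lip: "\<And>x y. \<bar>\<phi> x - \<phi> y\<bar> \<le> L * \<bar>x - y\<bar>" and ab: "a < b"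
  shows "negligible {x \<in> {a<..<b}. \<not> \<phi> differentiable (at x)}"
proof -
  have L0: "0 \<le> L" using lip[of 1 0] by simp
  have cont: "continuous_on UNIV \<phi>"
  proof (rule lipschitz_on_continuous_on)
    show "L-lipschitz_on UNIV \<phi>" using L0 lip by (auto simp: lipschitz_on_def dist_real_def)
  qed
  define P where "P = {pq :: real \<times> real. fst pq \<in> \<rat> \<and> snd pq \<in> \<rat> \<and> 0 < fst pq \<and> fst pq < snd pq}"
  define E where "E pq = {x \<in> {a<..<b}. lowD \<phi> x (fst pq) \<and> highD \<phi> x (snd pq)}" for pq
  have "countable P"
    by (rule countable_subset[of _ "\<rat> \<times> \<rat>"]) (auto simp: P_def countable_rat)
  then have "negligible (\<Union>(E ` P))"
  proof (intro negligible_countable_Union)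
    fix S assume "S \<in> E ` P"
    then obtain pq where pq: "pq \<in> P" "S = E pq" by blast
    show "negligible S" unfolding pq(2) E_def
      by (rule negligible_lowhigh[OF mono cont _ _ ab]) (use pq(1) in \<open>auto simp: P_def\<close>)
  qed simp
  moreover have "{x \<in> {a<..<b}. \<not> \<phi> differentiable (at x)} \<subseteq> \<Union>(E ` P)"
  proof
    fix x assume x: "x \<in> {x \<in> {a<..<b}. \<not> \<phi> differentiable (at x)}"
    then have "\<not> (\<forall>p q. p \<in> \<rat> \<longrightarrow> q \<in> \<rat> \<longrightarrow> 0 < p \<longrightarrow> p < q \<longrightarrow> \<not> (lowD \<phi> x p \<and> highD \<phi> x q))"
      using diff_from_lowhigh[OF mono lip] by blast
    then obtain p q where "p \<in> \<rat>" "q \<in> \<rat>" "0 < p" "p < q" "lowD \<phi> x p" "highD \<phi> x q" by blast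
    then show "x \<in> \<Union>(E ` P)" using x
      by (intro UN_I[of "(p, q)"]) (auto simp: P_def E_def)
  qed
  ultimately show ?thesis by (rule negligible_subset)
qed

lemma lipschitz_ae_diff:
  fixes F :: "real \<Rightarrow> 'b::euclidean_space"
  assumes lip: "\<And>s t. s \<in> {a..b} \<Longrightarrow> t \<in> {a..b} \<Longrightarrow> norm (F s - F t) \<le> L * \<bar>s - t\<bar>"
    and ab: "a < b" and L0: "0 \<le> L"
  shows "negligible {t \<in> {a<..<b}. \<not> F differentiable (at t)}"
proof -
  define cl where "cl s = max a (min b s)" for s
  have cl_in: "cl s \<in> {a..b}" for s using ab by (auto simp: cl_def)
  have cl_lip: "\<bar>cl s - cl s'\<bar> \<le> \<bar>s - s'\<bar>" for s s' by (auto simp: cl_def)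
  have cl_mono: "cl s \<le> cl s'" if "s \<le> s'" for s s' using that by (auto simp: cl_def)
  have cl_id: "cl s = s" if "s \<in> {a<..<b}" for s using that by (auto simp: cl_def)
  define \<phi> where "\<phi> i s = F (cl s) \<bullet> i + L * cl s" for i s
  have compbnd: "\<bar>F s \<bullet> i - F t \<bullet> i\<bar> \<le> L * \<bar>s - t\<bar>" if "i \<in> Basis" "s \<in> {a..b}" "t \<in> {a..b}" for i s t
  proof -
    have "\<bar>F s \<bullet> i - F t \<bullet> i\<bar> = \<bar>(F s - F t) \<bullet> i\<bar>" by (simp add: inner_diff_left)
    also have "\<dots> \<le> norm (F s - F t)" by (rule Basis_le_norm[OF that(1)])
    also have "\<dots> \<le> L * \<bar>s - t\<bar>" by (rule lip[OF that(2,3)])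
    finally show ?thesis .
  qed
  have neg: "negligible {x \<in> {a<..<b}. \<not> \<phi> i differentiable (at x)}" if i: "i \<in> Basis" for i
  proof (rule scalar_ae_diff[OF _ _ ab])
    show "mono (\<phi> i)"
    proof (rule monoI)
      fix s s' :: real assume "s \<le> s'"
      then have c: "cl s \<le> cl s'" by (rule cl_mono)
      have "\<bar>F (cl s') \<bullet> i - F (cl s) \<bullet> i\<bar> \<le> L * \<bar>cl s' - cl s\<bar>" by (rule compbnd[OF i cl_in cl_in])
      then show "\<phi> i s \<le> \<phi> i s'" using c by (simp add: \<phi>_def abs_le_iff algebra_simps)
    qed
    fix x y
    have "\<bar>\<phi> i x - \<phi> i y\<bar> \<le> \<bar>F (cl x) \<bullet> i - F (cl y) \<bullet> i\<bar> + L * \<bar>cl x - cl y\<bar>"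
    proof -
      have "\<phi> i x - \<phi> i y = (F (cl x) \<bullet> i - F (cl y) \<bullet> i) + L * (cl x - cl y)"
        by (simp add: \<phi>_def right_diff_distrib)
      also have "\<bar>\<dots>\<bar> \<le> \<bar>F (cl x) \<bullet> i - F (cl y) \<bullet> i\<bar> + \<bar>L * (cl x - cl y)\<bar>" by (rule abs_triangle_ineq)
      also have "\<bar>L * (cl x - cl y)\<bar> = L * \<bar>cl x - cl y\<bar>" using L0 by (simp add: abs_mult)
      finally show ?thesis .
    qed
    also have "\<dots> \<le> L * \<bar>cl x - cl y\<bar> + L * \<bar>cl x - cl y\<bar>"
      by (intro add_right_mono compbnd[OF i cl_in cl_in])
    also have "\<dots> \<le> (2 * L) * \<bar>x - y\<bar>"
      using mult_left_mono[OF cl_lip L0] by simp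
    finally show "\<bar>\<phi> i x - \<phi> i y\<bar> \<le> (2 * L) * \<bar>x - y\<bar>" .
  qed
  have "negligible (\<Union>i\<in>Basis. {x \<in> {a<..<b}. \<not> \<phi> i differentiable (at x)})"
  proof (rule negligible_Union)
    show "finite ((\<lambda>i. {x \<in> {a<..<b}. \<not> \<phi> i differentiable at x}) ` Basis)" by simp
  qed (use neg in blast)
  moreover have "{t \<in> {a<..<b}. \<not> F differentiable (at t)} \<subseteq> (\<Union>i\<in>Basis. {x \<in> {a<..<b}. \<not> \<phi> i differentiable (at x)})"
  proof
    fix t assume t: "t \<in> {t \<in> {a<..<b}. \<not> F differentiable (at t)}"
    show "t \<in> (\<Union>i\<in>Basis. {x \<in> {a<..<b}. \<not> \<phi> i differentiable (at x)})"
    proof (rule ccontr)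
      assume "\<not> ?thesis"
      then have d: "\<phi> i differentiable (at t)" if "i \<in> Basis" for i using t that by blast
      define G where "G s = (\<Sum>i\<in>Basis. (\<phi> i s - L * s) *\<^sub>R i)" for s
      have "G differentiable (at t)"
        unfolding G_def
      proof (intro differentiable_sum ballI)
        fix i :: 'b assume i: "i \<in> Basis"
        obtain Di where Di: "(\<phi> i has_real_derivative Di) (at t)"
          using d[OF i] real_differentiable_def by blast
        have "((\<lambda>x. \<phi> i x - L * x) has_real_derivative (Di - L)) (at t)"
          using DERIV_diff[OF Di DERIV_cmult_Id[of L t]] by simp
        then have "((\<lambda>x. (\<phi> i x - L * x) *\<^sub>R i) has_vector_derivative (Di - L) *\<^sub>R i) (at t)"
          using bounded_linear.has_vector_derivative[OF bounded_linear_scaleR_left[of i]]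
          by (simp add: has_real_derivative_iff_has_vector_derivative)
        then show "(\<lambda>x. (\<phi> i x - L * x) *\<^sub>R i) differentiable (at t)"
          using differentiableI_vector by blast
      qed simp
      moreover have GF: "G s = F s" if "s \<in> {a<..<b}" for s
      proof -
        have "G s = (\<Sum>i\<in>Basis. (F s \<bullet> i) *\<^sub>R i)" unfolding G_def \<phi>_def cl_id[OF that] by simp
        also have "\<dots> = F s" by (rule euclidean_representation)
        finally show ?thesis .
      qed
      moreover have "0 < min (t - a) (b - t)" using t by simp
      moreover have inab: "s \<in> {a<..<b}" if "dist s t < min (t - a) (b - t)" for s
        using that by (auto simp: dist_real_def abs_if split: if_splits)
      ultimately have "F differentiable (at t within UNIV)"
        using differentiable_transform_within[of G t UNIV "min (t - a) (b - t)" F]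
        by (metis GF inab UNIV_I)
      with t show False by simp
    qed
  qed
  ultimately show ?thesis by (rule negligible_subset)
qed

lemma real_incr_finite_exc:
  fixes \<phi> :: "real \<Rightarrow> real"
  assumes ab: "a \<le> b" and F: "finite F" and cont: "continuous_on {a..b} \<phi>"
    and der: "\<And>s. s \<in> {a<..<b} - F \<Longrightarrow> (\<phi> has_real_derivative \<phi>' s) (at s)"
    and ge: "\<And>s. s \<in> {a<..<b} - F \<Longrightarrow> \<phi>' s \<ge> \<beta>"
  shows "\<phi> b - \<phi> a \<ge> \<beta> * (b - a)"
proof -
  define F' where "F' = F \<union> {a, b}"
  define \<psi> where "\<psi> s = (if s \<in> F' then \<beta> else \<phi>' s)" for s
  have "finite F'" using F by (simp add: F'_def)
  have "(\<psi> has_integral (\<phi> b - \<phi> a)) {a..b}"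
  proof (rule fundamental_theorem_of_calculus_strong[OF \<open>finite F'\<close> ab _ cont])
    fix x assume x: "x \<in> {a..b} - F'"
    then have "x \<in> {a<..<b} - F" by (auto simp: F'_def)
    then have "(\<phi> has_real_derivative \<phi>' x) (at x)" by (rule der)
    then show "(\<phi> has_vector_derivative \<psi> x) (at x)"
      using x by (simp add: \<psi>_def has_real_derivative_iff_has_vector_derivative)
  qed
  moreover have "((\<lambda>_. \<beta>) has_integral (\<beta> * (b - a))) {a..b}"
    using has_integral_const_real[of \<beta> a b] ab by (simp add: mult.commute)
  moreover have "\<And>s. s \<in> {a..b} \<Longrightarrow> \<beta> \<le> \<psi> s"
    using ge by (auto simp: \<psi>_def F'_def)
  ultimately show ?thesis
    using has_integral_le by blast
qed

lemma mvt_convex: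
  fixes f :: "real \<Rightarrow> 'b::euclidean_space"
  assumes ab: "a < b" and F: "finite F" and cont: "continuous_on {a..b} f"
    and der: "\<And>s. s \<in> {a<..<b} - F \<Longrightarrow> (f has_vector_derivative f' s) (at s)"
    and inK: "\<And>s. s \<in> {a<..<b} - F \<Longrightarrow> f' s \<in> K"
    and K: "convex K" "closed K"
  shows "(f b - f a) /\<^sub>R (b - a) \<in> K"
proof (rule ccontr)
  let ?z = "(f b - f a) /\<^sub>R (b - a)"
  assume "?z \<notin> K"
  then obtain c \<beta> where c: "inner c ?z < \<beta>" and cK: "\<And>x. x \<in> K \<Longrightarrow> \<beta> < inner c x"
    using separating_hyperplane_closed_point[OF K] by blast
  have "(\<lambda>s. inner c (f s)) b - (\<lambda>s. inner c (f s)) a \<ge> \<beta> * (b - a)"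
  proof (rule real_incr_finite_exc[OF _ F])
    show "continuous_on {a..b} (\<lambda>s. inner c (f s))"
      by (intro continuous_intros cont)
    fix s assume s: "s \<in> {a<..<b} - F"
    show "((\<lambda>s. inner c (f s)) has_real_derivative inner c (f' s)) (at s)"
      using bounded_linear.has_vector_derivative[OF bounded_linear_inner_right der[OF s]]
      by (simp add: has_real_derivative_iff_has_vector_derivative)
    show "\<beta> \<le> inner c (f' s)" using cK[OF inK[OF s]] by simp
  qed (use ab in auto)
  moreover have "inner c (f b - f a) = (b - a) * inner c ?z"
    using ab by (simp add: inner_diff_right)
  ultimately have "\<beta> * (b - a) \<le> (b - a) * inner c ?z" by (metis inner_diff_right)
  then have "\<beta> \<le> inner c ?z" using ab by (simp add: mult.commute)
  with c show False by simp
qed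

lemma Cset_hausdorff:
  fixes gf :: "nat \<Rightarrow> 'a::euclidean_space \<Rightarrow> 'a"
  assumes "\<And>i. i \<in> {1..m} \<Longrightarrow> norm (gf i u' - gf i u) \<le> \<delta>"
  shows "Cset m gf u' \<subseteq> {a + b |a b. a \<in> Cset m gf u \<and> b \<in> cball 0 \<delta>}"
  unfolding Cset_def
proof (rule hull_minimal)
  show "convex {a + b |a b. a \<in> convex hull {gf i u |i. i \<in> {1..m}} \<and> b \<in> cball 0 \<delta>}"
  proof -
    have "{a + b |a b. a \<in> convex hull {gf i u |i. i \<in> {1..m}} \<and> b \<in> cball 0 \<delta>}
        = (\<Union>a\<in>convex hull {gf i u |i. i \<in> {1..m}}. \<Union>b\<in>cball 0 \<delta>. {a + b})" by blast
    moreover have "convex (\<Union>a\<in>convex hull {gf i u |i. i \<in> {1..m}}. \<Union>b\<in>cball 0 \<delta>. {a + b})"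
      by (rule convex_sums[OF convex_convex_hull convex_cball])
    ultimately show ?thesis by (simp only:)
  qed
  show "{gf i u' |i. i \<in> {1..m}} \<subseteq> {a + b |a b. a \<in> convex hull {gf i u |i. i \<in> {1..m}} \<and> b \<in> cball 0 \<delta>}"
  proof
    fix x assume "x \<in> {gf i u' |i. i \<in> {1..m}}"
    then obtain i where i: "i \<in> {1..m}" "x = gf i u'" by blast
    have "gf i u \<in> convex hull {gf i u |i. i \<in> {1..m}}" using i(1) by (intro hull_inc) blast
    moreover have "gf i u' - gf i u \<in> cball 0 \<delta>" using assms[OF i(1)] by (simp add: dist_norm norm_minus_commute)
    moreover have "x = gf i u + (gf i u' - gf i u)" using i(2) by simp
    ultimately show "x \<in> {a + b |a b. a \<in> convex hull {gf i u |i. i \<in> {1..m}} \<and> b \<in> cball 0 \<delta>}" by blast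
  qed
qed

lemma Cset_compact:
  fixes gf :: "nat \<Rightarrow> 'a::euclidean_space \<Rightarrow> 'a"
  shows "compact (Cset m gf u)"
proof -
  have "{gf i u |i. i \<in> {1..m}} = (\<lambda>i. gf i u) ` {1..m}" by auto
  then have "finite {gf i u |i. i \<in> {1..m}}" by simp
  then show ?thesis unfolding Cset_def by (rule compact_convex_hull[OF finite_imp_compact])
qed

lemma Cset_nonempty: "1 \<le> m \<Longrightarrow> Cset m gf u \<noteq> {}"
proof -
  assume "1 \<le> m"
  then have "gf 1 u \<in> {gf i u |i. i \<in> {1..m}}" by auto
  then have "gf 1 u \<in> Cset m gf u" unfolding Cset_def by (rule hull_inc)
  then show ?thesis by blast
qed

lemma Cset_bound:
  assumes "\<And>i. i \<in> {1..m} \<Longrightarrow> norm (gf i u) \<le> M"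
  shows "Cset m gf u \<subseteq> cball 0 M"
  unfolding Cset_def
proof (rule hull_minimal)
  show "{gf i u |i. i \<in> {1..m}} \<subseteq> cball 0 M" using assms by (auto simp: dist_norm)
qed simp

lemma argmin_nonempty:
  fixes gf :: "nat \<Rightarrow> 'a::euclidean_space \<Rightarrow> 'a"
  assumes "1 \<le> m"
  shows "\<exists>g. g \<in> argmin_set (Cset m gf u) (\<lambda>g. g \<bullet> (- v))"
proof -
  have "continuous_on (Cset m gf u) (\<lambda>g. g \<bullet> (- v))" by (intro continuous_intros)
  then obtain g where "g \<in> Cset m gf u" "\<forall>h\<in>Cset m gf u. g \<bullet> (- v) \<le> h \<bullet> (- v)"
    using continuous_attains_inf[OF Cset_compact Cset_nonempty[OF assms]] by blast
  then show ?thesis unfolding argmin_set_def by blast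
qed

locale ivp =
  fixes m :: nat and gf :: "nat \<Rightarrow> 'a::euclidean_space \<Rightarrow> 'a" and \<alpha> t0 :: real and u0 v0 :: 'a
  assumes m: "1 \<le> m" and gcont: "\<And>i. i \<in> {1..m} \<Longrightarrow> continuous_on UNIV (gf i)"
    and \<alpha>: "0 < \<alpha>" and t0: "0 < t0"
begin

definition gsel :: "'a \<Rightarrow> 'a \<Rightarrow> 'a" where
  "gsel u v = (SOME g. g \<in> argmin_set (Cset m gf u) (\<lambda>g. g \<bullet> (- v)))"

lemma gsel: "gsel u v \<in> Cset m gf u" "\<And>h. h \<in> Cset m gf u \<Longrightarrow> gsel u v \<bullet> (- v) \<le> h \<bullet> (- v)"
proof -
  have "gsel u v \<in> argmin_set (Cset m gf u) (\<lambda>g. g \<bullet> (- v))"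
    unfolding gsel_def using argmin_nonempty[OF m] by (rule someI_ex)
  then show "gsel u v \<in> Cset m gf u" "\<And>h. h \<in> Cset m gf u \<Longrightarrow> gsel u v \<bullet> (- v) \<le> h \<bullet> (- v)"
    unfolding argmin_set_def by auto
qed

definition Dv :: "real \<Rightarrow> nat \<Rightarrow> 'a \<times> 'a \<Rightarrow> 'a \<times> 'a" where
  "Dv h k X = (snd X, - (\<alpha> / (t0 + real k * h)) *\<^sub>R snd X - gsel (fst X) (snd X))"

primrec Xs :: "real \<Rightarrow> nat \<Rightarrow> 'a \<times> 'a" where
  "Xs h 0 = (u0, v0)"
| "Xs h (Suc k) = Xs h k + h *\<^sub>R Dv h k (Xs h k)"

definition idx :: "real \<Rightarrow> real \<Rightarrow> nat" where
  "idx h t = nat \<lfloor>(t - t0) / h\<rfloor>"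

definition xe :: "real \<Rightarrow> real \<Rightarrow> 'a \<times> 'a" where
  "xe h t = Xs h (idx h t) + (t - (t0 + real (idx h t) * h)) *\<^sub>R Dv h (idx h t) (Xs h (idx h t))"

lemma exM: "\<exists>M. 0 \<le> M \<and> (\<forall>u\<in>cball u0 1. \<forall>i\<in>{1..m}. norm (gf i u) \<le> M)"
proof -
  have "compact (\<Union>i\<in>{1..m}. gf i ` cball u0 1)"
    by (intro compact_UN compact_continuous_image continuous_on_subset[OF gcont]) auto
  then have "bounded (\<Union>i\<in>{1..m}. gf i ` cball u0 1)" by (rule compact_imp_bounded)
  then obtain M where M: "\<forall>x\<in>(\<Union>i\<in>{1..m}. gf i ` cball u0 1). norm x \<le> M"
    unfolding bounded_iff by blast
  have "norm (gf i u) \<le> max 0 M" if "u \<in> cball u0 1" "i \<in> {1..m}" for u i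
  proof -
    have "gf i u \<in> (\<Union>i\<in>{1..m}. gf i ` cball u0 1)" using that by blast
    then have "norm (gf i u) \<le> M" using M by blast
    then show ?thesis by simp
  qed
  then show ?thesis by (intro exI[of _ "max 0 M"]) simp
qed

definition M where "M = (SOME M. 0 \<le> M \<and> (\<forall>u\<in>cball u0 1. \<forall>i\<in>{1..m}. norm (gf i u) \<le> M))"

lemma M: "0 \<le> M" "\<And>u i. u \<in> cball u0 1 \<Longrightarrow> i \<in> {1..m} \<Longrightarrow> norm (gf i u) \<le> M"
  using someI_ex[OF exM] unfolding M_def[symmetric] by auto

lemma C_bound: "u \<in> cball u0 1 \<Longrightarrow> g \<in> Cset m gf u \<Longrightarrow> norm g \<le> M"
  using Cset_bound[of m gf u M] M(2) by auto

definition B where "B = norm v0 + 1"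
definition K0 where "K0 = \<alpha> / t0 * B + M"
definition \<tau> where "\<tau> = 1 / (B + K0 + 1)"
definition Kd where "Kd = B + K0"

lemma cst: "0 < B" "0 \<le> K0" "0 < \<tau>" "\<tau> * B \<le> 1" "\<tau> * K0 \<le> 1" "0 \<le> Kd"
proof -
  show B: "0 < B" by (simp add: B_def add_nonneg_pos)
  show K: "0 \<le> K0" unfolding K0_def using \<alpha> t0 B M(1) by simp
  show "0 < \<tau>" unfolding \<tau>_def using B K by simp
  show "\<tau> * B \<le> 1" unfolding \<tau>_def using B K by (simp add: field_simps)
  show "\<tau> * K0 \<le> 1" unfolding \<tau>_def using B K by (simp add: field_simps)
  show "0 \<le> Kd" unfolding Kd_def using B K by simp
qed

lemma Xs_bound:
  assumes h: "0 < h" and k: "real k * h \<le> \<tau>"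
  shows "norm (fst (Xs h k) - u0) \<le> real k * h * B \<and> norm (snd (Xs h k) - v0) \<le> real k * h * K0"
  using k
proof (induction k)
  case 0
  then show ?case by simp
next
  case (Suc k)
  have kk: "real k * h \<le> \<tau>" using Suc.prems h by (simp add: algebra_simps)
  note IH = Suc.IH[OF kk]
  define U where "U = fst (Xs h k)"
  define V where "V = snd (Xs h k)"
  have "real k * h * K0 \<le> 1" using kk cst(2) cst(5) by (meson mult_right_mono order_trans)
  then have VB: "norm V \<le> B" using IH norm_triangle_sub[of V v0] by (simp add: B_def V_def)
  have "real k * h * B \<le> 1" using kk cst(1) cst(4) by (meson less_imp_le mult_right_mono order_trans)
  then have Uc: "U \<in> cball u0 1" using IH by (simp add: U_def dist_norm norm_minus_commute)
  have gb: "norm (gsel U V) \<le> M" using C_bound[OF Uc gsel(1)] .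
  have tk: "t0 \<le> t0 + real k * h" using h by simp
  have "norm ((\<alpha> / (t0 + real k * h)) *\<^sub>R V) \<le> \<alpha> / t0 * B"
  proof -
    have "norm ((\<alpha> / (t0 + real k * h)) *\<^sub>R V) = \<alpha> / (t0 + real k * h) * norm V"
      using \<alpha> t0 h by simp
    also have "\<dots> \<le> \<alpha> / t0 * B"
      using \<alpha> t0 tk VB by (intro mult_mono frac_le) auto
    finally show ?thesis .
  qed
  then have "norm (- (\<alpha> / (t0 + real k * h)) *\<^sub>R V - gsel U V) \<le> K0"
    using gb norm_triangle_ineq4[of "- (\<alpha> / (t0 + real k * h)) *\<^sub>R V" "gsel U V"] by (simp add: K0_def)
  then have n2: "norm (h *\<^sub>R (- (\<alpha> / (t0 + real k * h)) *\<^sub>R V - gsel U V)) \<le> h * K0"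
    using h by (simp add: mult_left_mono)
  have n1: "norm (h *\<^sub>R V) \<le> h * B" using h VB by (simp add: mult_left_mono)
  have e1: "fst (Xs h (Suc k)) - u0 = (U - u0) + h *\<^sub>R V"
    by (simp add: Dv_def U_def V_def)
  have e2: "snd (Xs h (Suc k)) - v0 = (V - v0) + h *\<^sub>R (- (\<alpha> / (t0 + real k * h)) *\<^sub>R V - gsel U V)"
    by (simp add: Dv_def U_def V_def)
  have "norm (fst (Xs h (Suc k)) - u0) \<le> norm (U - u0) + norm (h *\<^sub>R V)"
    unfolding e1 by (rule norm_triangle_ineq)
  also have "\<dots> \<le> real k * h * B + h * B" using IH n1 unfolding U_def by linarith
  also have "\<dots> = real (Suc k) * h * B" by (simp add: algebra_simps)
  finally have r1: "norm (fst (Xs h (Suc k)) - u0) \<le> real (Suc k) * h * B" .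
  have "norm (snd (Xs h (Suc k)) - v0) \<le> norm (V - v0) + norm (h *\<^sub>R (- (\<alpha> / (t0 + real k * h)) *\<^sub>R V - gsel U V))"
    unfolding e2 by (rule norm_triangle_ineq)
  also have "\<dots> \<le> real k * h * K0 + h * K0" using IH n2 unfolding V_def by linarith
  also have "\<dots> = real (Suc k) * h * K0" by (simp add: algebra_simps)
  finally have r2: "norm (snd (Xs h (Suc k)) - v0) \<le> real (Suc k) * h * K0" .
  show ?case by (rule conjI[OF r1 r2])
qed

lemma idx_eq:
  assumes h: "0 < h" and t: "t0 + real k * h \<le> t" "t < t0 + (real k + 1) * h"
  shows "idx h t = k"
proof -
  have "real k \<le> (t - t0) / h" using t h by (simp add: pos_le_divide_eq algebra_simps)
  moreover have "(t - t0) / h < real k + 1" using t h by (simp add: pos_divide_less_eq algebra_simps)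
  ultimately have "\<lfloor>(t - t0) / h\<rfloor> = int k" by (simp add: floor_eq_iff)
  then show ?thesis by (simp add: idx_def)
qed

lemma xe_piece:
  assumes h: "0 < h" and t: "t0 + real k * h \<le> t" "t \<le> t0 + (real k + 1) * h"
  shows "xe h t = Xs h k + (t - (t0 + real k * h)) *\<^sub>R Dv h k (Xs h k)"
proof (cases "t < t0 + (real k + 1) * h")
  case True
  then show ?thesis using idx_eq[OF h t(1) True] by (simp add: xe_def)
next
  case False
  then have teq: "t = t0 + real (Suc k) * h" using t(2) by (simp add: algebra_simps)
  have "idx h t = Suc k" using h by (intro idx_eq) (auto simp: teq algebra_simps)
  then have "xe h t = Xs h (Suc k)" by (simp add: xe_def teq)
  also have "\<dots> = Xs h k + (t - (t0 + real k * h)) *\<^sub>R Dv h k (Xs h k)"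
    by (simp add: teq algebra_simps)
  finally show ?thesis .
qed

lemma xe_grid: "0 < h \<Longrightarrow> xe h (t0 + real k * h) = Xs h k"
  using xe_piece[of h k "t0 + real k * h"] by simp

lemma xe_cont:
  assumes h: "0 < h"
  shows "continuous_on {t0..t0 + real j * h} (xe h)"
proof (induction j)
  case 0
  then show ?case by simp
next
  case (Suc j)
  have piece: "continuous_on {t0 + real j * h..t0 + real (Suc j) * h} (xe h)"
  proof (rule continuous_on_eq[where f = "\<lambda>t. Xs h j + (t - (t0 + real j * h)) *\<^sub>R Dv h j (Xs h j)"])
    show "continuous_on {t0 + real j * h..t0 + real (Suc j) * h} (\<lambda>t. Xs h j + (t - (t0 + real j * h)) *\<^sub>R Dv h j (Xs h j))"
      by (intro continuous_intros)
    fix t assume "t \<in> {t0 + real j * h..t0 + real (Suc j) * h}"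
    then show "Xs h j + (t - (t0 + real j * h)) *\<^sub>R Dv h j (Xs h j) = xe h t"
      using xe_piece[OF h, of j t] by (simp add: algebra_simps)
  qed
  have jh: "0 \<le> real j * h" using h by simp
  have "{t0..t0 + real (Suc j) * h} = {t0..t0 + real j * h} \<union> {t0 + real j * h..t0 + real (Suc j) * h}"
    using h jh by (intro ivl_disj_un_two_touch(4)[symmetric]) (auto simp: algebra_simps)
  then show ?case using continuous_on_closed_Un[OF closed_atLeastAtMost closed_atLeastAtMost Suc.IH piece] by simp
qed

lemma Dv_bound:
  assumes h: "0 < h" and k: "real k * h \<le> \<tau>"
  shows "norm (Dv h k (Xs h k)) \<le> Kd" "fst (Xs h k) \<in> cball u0 1" "norm (snd (Xs h k)) \<le> B"
proof -
  note XB = Xs_bound[OF h k]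
  define U where "U = fst (Xs h k)"
  define V where "V = snd (Xs h k)"
  have "real k * h * K0 \<le> 1" using k cst(2) cst(5) by (meson mult_right_mono order_trans)
  then show VB: "norm (snd (Xs h k)) \<le> B" using XB norm_triangle_sub[of V v0] by (simp add: B_def V_def)
  have "real k * h * B \<le> 1" using k cst(1) cst(4) by (meson less_imp_le mult_right_mono order_trans)
  then show Uc: "fst (Xs h k) \<in> cball u0 1" using XB by (simp add: dist_norm norm_minus_commute)
  have gb: "norm (gsel U V) \<le> M" using C_bound[OF Uc[folded U_def] gsel(1)] .
  have tk: "t0 \<le> t0 + real k * h" using h by simp
  have "norm ((\<alpha> / (t0 + real k * h)) *\<^sub>R V) \<le> \<alpha> / t0 * B"
  proof -
    have "norm ((\<alpha> / (t0 + real k * h)) *\<^sub>R V) = \<alpha> / (t0 + real k * h) * norm V"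
      using \<alpha> t0 h by simp
    also have "\<dots> \<le> \<alpha> / t0 * B"
      using \<alpha> t0 tk VB by (intro mult_mono frac_le) (auto simp: V_def)
    finally show ?thesis .
  qed
  then have "norm (- (\<alpha> / (t0 + real k * h)) *\<^sub>R V - gsel U V) \<le> K0"
    using gb norm_triangle_ineq4[of "- (\<alpha> / (t0 + real k * h)) *\<^sub>R V" "gsel U V"] by (simp add: K0_def)
  moreover have "norm (Dv h k (Xs h k)) \<le> norm V + norm (- (\<alpha> / (t0 + real k * h)) *\<^sub>R V - gsel U V)"
    unfolding Dv_def U_def V_def by (rule norm_Pair_le)
  ultimately show "norm (Dv h k (Xs h k)) \<le> Kd" using VB unfolding Kd_def V_def by linarith
qed

lemma xe_deriv:
  assumes h: "0 < h" and s: "t0 < s" "s < t0 + real N * h" and ng: "s \<notin> (\<lambda>k. t0 + real k * h) ` {..N}"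
  shows "(xe h has_vector_derivative Dv h (idx h s) (Xs h (idx h s))) (at s)"
    "idx h s < N" "t0 + real (idx h s) * h < s" "s < t0 + (real (idx h s) + 1) * h"
proof -
  define k where "k = idx h s"
  have q: "0 \<le> (s - t0) / h" using s h by simp
  have kf: "real k = of_int \<lfloor>(s - t0) / h\<rfloor>" using q by (simp add: k_def idx_def)
  have "real k \<le> (s - t0) / h" "(s - t0) / h < real k + 1"
    using kf by linarith+
  then have k1: "t0 + real k * h \<le> s" and k2: "s < t0 + (real k + 1) * h"
    using h by (simp_all add: pos_le_divide_eq pos_divide_less_eq algebra_simps)
  have kN: "k < N"
  proof (rule ccontr)
    assume "\<not> k < N"
    then have "real N * h \<le> real k * h" using h by simp
    then show False using k1 s(2) by simp
  qed
  have k1': "t0 + real k * h < s"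
  proof -
    have "s \<noteq> t0 + real k * h" using ng kN by auto
    then show ?thesis using k1 by simp
  qed
  show "idx h s < N" "t0 + real (idx h s) * h < s" "s < t0 + (real (idx h s) + 1) * h"
    using kN k1' k2 by (simp_all add: k_def)
  have "((\<lambda>t. Xs h k + (t - (t0 + real k * h)) *\<^sub>R Dv h k (Xs h k)) has_vector_derivative Dv h k (Xs h k)) (at s)"
    by (auto intro!: derivative_eq_intros)
  then show "(xe h has_vector_derivative Dv h (idx h s) (Xs h (idx h s))) (at s)"
    unfolding k_def[symmetric]
  proof (rule has_vector_derivative_transform_within_open)
    show "open {t0 + real k * h<..<t0 + (real k + 1) * h}" by simp
    show "s \<in> {t0 + real k * h<..<t0 + (real k + 1) * h}" using k1' k2 by simp
    fix y assume "y \<in> {t0 + real k * h<..<t0 + (real k + 1) * h}"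
    then show "Xs h k + (y - (t0 + real k * h)) *\<^sub>R Dv h k (Xs h k) = xe h y"
      using xe_piece[OF h, of k y] by simp
  qed
qed

lemma xe_lip:
  assumes h: "0 < h" and N: "real N * h = \<tau>" and s: "s1 \<in> {t0..t0 + \<tau>}" "s2 \<in> {t0..t0 + \<tau>}"
  shows "norm (xe h s2 - xe h s1) \<le> Kd * \<bar>s2 - s1\<bar>"
proof -
  have main: "norm (xe h b - xe h a) \<le> Kd * (b - a)" if ab: "a < b" "a \<in> {t0..t0 + \<tau>}" "b \<in> {t0..t0 + \<tau>}" for a b
  proof -
    let ?F = "(\<lambda>k. t0 + real k * h) ` {..N}"
    have "(xe h b - xe h a) /\<^sub>R (b - a) \<in> cball 0 Kd"
    proof (rule mvt_convex[OF ab(1), of ?F _ "\<lambda>s. Dv h (idx h s) (Xs h (idx h s))"])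
      show "finite ?F" by simp
      show "continuous_on {a..b} (xe h)"
        by (rule continuous_on_subset[OF xe_cont[OF h, of N]]) (use ab N in auto)
      fix s assume s: "s \<in> {a<..<b} - ?F"
      then have s': "t0 < s" "s < t0 + real N * h" using ab N by auto
      show "(xe h has_vector_derivative Dv h (idx h s) (Xs h (idx h s))) (at s)"
        using xe_deriv(1)[OF h s'] s by blast
      have "idx h s < N" using xe_deriv(2)[OF h s'] s by blast
      then have "real (idx h s) * h \<le> \<tau>" using h N by (simp add: mult_right_mono flip: N)
      then show "Dv h (idx h s) (Xs h (idx h s)) \<in> cball 0 Kd" using Dv_bound(1)[OF h] by simp
    qed auto
    then show ?thesis using ab by (simp add: divide_simps)
  qed
  show ?thesis
  proof (cases s1 s2 rule: linorder_cases)
    case less then show ?thesis using main[OF less s] by simp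
  next
    case equal then show ?thesis by simp
  next
    case greater then show ?thesis using main[OF greater s(2) s(1)] by (simp add: norm_minus_commute)
  qed
qed

end

context ivp begin

definition hn :: "nat \<Rightarrow> real" where "hn n = \<tau> / real (Suc n)"
definition T where "T = t0 + \<tau>"

lemma hn: "0 < hn n" "real (Suc n) * hn n = \<tau>"
  using cst(3) by (auto simp: hn_def)

lemma hn_small: "0 < \<delta> \<Longrightarrow> \<exists>J. \<forall>j\<ge>J. hn j < \<delta>"
proof -
  assume d: "0 < \<delta>"
  obtain J :: nat where J: "\<tau> / \<delta> < real J" using reals_Archimedean2 by blast
  have "hn j < \<delta>" if "j \<ge> J" for j
  proof -
    have "\<tau> < \<delta> * real J" using J d by (simp add: field_simps)
    also have "\<dots> \<le> \<delta> * real (Suc j)" using that d by simp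
    finally show ?thesis using d by (simp add: hn_def field_simps)
  qed
  then show ?thesis by blast
qed

lemma xe_lip_n: "s1 \<in> {t0..T} \<Longrightarrow> s2 \<in> {t0..T} \<Longrightarrow> norm (xe (hn n) s2 - xe (hn n) s1) \<le> Kd * \<bar>s2 - s1\<bar>"
  using xe_lip[OF hn(1) hn(2)] by (simp add: T_def)

lemma xe_t0: "xe (hn n) t0 = (u0, v0)"
  using xe_grid[OF hn(1), of n 0] by simp

lemma arzela:
  obtains xl r where "continuous_on {t0..T} xl" "strict_mono (r :: nat \<Rightarrow> nat)"
    "\<And>e. 0 < e \<Longrightarrow> \<exists>N. \<forall>n x. n \<ge> N \<and> x \<in> {t0..T} \<longrightarrow> norm (xe (hn (r n)) x - xl x) < e"
proof -
  have "\<exists>g r. continuous_on {t0..T} g \<and> strict_mono (r :: nat \<Rightarrow> nat) \<and>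
    (\<forall>e. 0 < e \<longrightarrow> (\<exists>N. \<forall>n x. n \<ge> N \<and> x \<in> {t0..T} \<longrightarrow> norm (xe (hn (r n)) x - g x) < e))"
  proof (rule Arzela_Ascoli[of "{t0..T}" "\<lambda>n. xe (hn n)" "norm (u0, v0) + Kd * \<tau>"])
    show "compact {t0..T}" by simp
    fix n x assume x: "x \<in> {t0..T}"
    have "norm (xe (hn n) x - xe (hn n) t0) \<le> Kd * \<bar>x - t0\<bar>"
      by (rule xe_lip_n) (use x cst(3) in \<open>auto simp: T_def\<close>)
    moreover have "Kd * \<bar>x - t0\<bar> \<le> Kd * \<tau>" using x cst(6) by (intro mult_left_mono) (auto simp: T_def)
    ultimately show "norm (xe (hn n) x) \<le> norm (u0, v0) + Kd * \<tau>"
      using norm_triangle_sub[of "xe (hn n) x" "xe (hn n) t0"] xe_t0 by simp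
  next
    fix x e assume x: "x \<in> {t0..T}" and e: "0 < (e::real)"
    show "\<exists>d>0. \<forall>n y. y \<in> {t0..T} \<and> norm (x - y) < d \<longrightarrow> norm (xe (hn n) x - xe (hn n) y) < e"
    proof (intro exI[of _ "e / (Kd + 1)"] conjI allI impI)
      show "0 < e / (Kd + 1)" using e cst(6) by simp
      fix n y assume y: "y \<in> {t0..T} \<and> norm (x - y) < e / (Kd + 1)"
      have "norm (xe (hn n) x - xe (hn n) y) \<le> Kd * \<bar>x - y\<bar>" using xe_lip_n[of y x n] x y by simp
      also have "\<dots> \<le> Kd * (e / (Kd + 1))" using y cst(6) by (intro mult_left_mono) auto
      also have "\<dots> < e" using e cst(6) by (simp add: field_simps)
      finally show "norm (xe (hn n) x - xe (hn n) y) < e" .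
    qed
  qed blast
  then show ?thesis using that by blast
qed

lemma key:
  assumes r: "strict_mono (r :: nat \<Rightarrow> nat)"
    and conv: "\<And>e. 0 < e \<Longrightarrow> \<exists>N. \<forall>n x. n \<ge> N \<and> x \<in> {t0..T} \<longrightarrow> norm (xe (hn (r n)) x - xl x) < e"
    and t: "t0 < t" "t < T" and der: "(xl has_vector_derivative w) (at t)"
    and K: "closed K" "convex K"
    and \<eta>: "0 < \<eta>"
    and cond: "\<And>n k. hn n < \<eta> \<Longrightarrow> k < Suc n \<Longrightarrow> \<bar>t0 + real k * hn n - t\<bar> < \<eta> \<Longrightarrow>
                  norm (Xs (hn n) k - xl t) < \<eta> \<Longrightarrow> Dv (hn n) k (Xs (hn n) k) \<in> K"
  shows "w \<in> K"
proof -
  define \<rho> where "\<rho> = \<eta> / (4 * (Kd + 1))"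
  have \<rho>: "0 < \<rho>" "Kd * \<rho> < \<eta> / 4" "\<rho> \<le> \<eta> / 4"
    using \<eta> cst(6) by (auto simp: \<rho>_def field_simps)
  have stepA: "(xl (t + h) - xl t) /\<^sub>R h \<in> K" if h: "0 < h" "h < \<rho>" "t + h < T" for h
  proof -
    have tS: "t \<in> {t0..T}" "t + h \<in> {t0..T}" using t h by auto
    have lim: "(\<lambda>j. xe (hn (r j)) y) \<longlonglongrightarrow> xl y" if "y \<in> {t0..T}" for y
      unfolding LIMSEQ_iff using conv that by blast
    have tend: "(\<lambda>j. (xe (hn (r j)) (t + h) - xe (hn (r j)) t) /\<^sub>R h) \<longlonglongrightarrow> (xl (t + h) - xl t) /\<^sub>R h"
      by (intro tendsto_intros lim tS)
    obtain J1 where J1: "\<And>j. j \<ge> J1 \<Longrightarrow> hn j < \<rho>" using hn_small[OF \<rho>(1)] by blast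
    obtain J2 where J2: "\<And>j x. j \<ge> J2 \<Longrightarrow> x \<in> {t0..T} \<Longrightarrow> norm (xe (hn (r j)) x - xl x) < \<eta> / 4"
      using conv[of "\<eta> / 4"] \<eta> by auto
    have "eventually (\<lambda>j. (xe (hn (r j)) (t + h) - xe (hn (r j)) t) /\<^sub>R h \<in> K) sequentially"
      unfolding eventually_sequentially
    proof (intro exI[of _ "max J1 J2"] allI impI)
      fix j assume j: "max J1 J2 \<le> j"
      define n where "n = r j"
      define hh where "hh = hn n"
      have hh: "0 < hh" "real (Suc n) * hh = \<tau>" using hn by (auto simp: hh_def)
      have "j \<le> r j" using r by (rule seq_suble)
      then have hhr: "hh < \<rho>" using J1[of n] j by (simp add: hh_def n_def)
      have close_t: "norm (xe hh t - xl t) < \<eta> / 4" using J2[OF _ tS(1), of j] j by (simp add: hh_def n_def)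
      let ?F = "(\<lambda>k. t0 + real k * hh) ` {..Suc n}"
      show "(xe (hn (r j)) (t + h) - xe (hn (r j)) t) /\<^sub>R h \<in> K"
      proof -
        have cont: "continuous_on {t..t + h} (xe hh)"
          by (rule continuous_on_subset[OF xe_cont[OF hh(1), of "Suc n"]]) (use tS hh in \<open>auto simp: T_def\<close>)
        have inK: "Dv hh (idx hh s) (Xs hh (idx hh s)) \<in> K" and dv: "(xe hh has_vector_derivative Dv hh (idx hh s) (Xs hh (idx hh s))) (at s)"
          if s: "s \<in> {t<..<t + h} - ?F" for s
        proof -
          have s': "t0 < s" "s < t0 + real (Suc n) * hh" using s t h hh by (auto simp: T_def)
          have ng: "s \<notin> ?F" using s by blast
          note D = xe_deriv[OF hh(1) s' ng]
          show "(xe hh has_vector_derivative Dv hh (idx hh s) (Xs hh (idx hh s))) (at s)" by (rule D(1))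
          define k where "k = idx hh s"
          have k: "k < Suc n" "t0 + real k * hh < s" "s < t0 + (real k + 1) * hh"
            using D(2-4) by (simp_all add: k_def)
          have tk: "\<bar>t0 + real k * hh - t\<bar> < \<eta>"
            using k s hhr \<rho>(1,3) h by (auto simp: abs_if algebra_simps)
          have tkS: "t0 + real k * hh \<in> {t0..T}"
          proof -
            have "real k * hh \<le> real (Suc n) * hh" using k(1) hh(1) by (intro mult_right_mono) auto
            then have "real k * hh \<le> \<tau>" using hh(2) by linarith
            moreover have "0 \<le> real k * hh" using hh(1) by simp
            ultimately show ?thesis by (auto simp: T_def)
          qed
          have sS: "s \<in> {t0..T}" using s tS by auto
          have "norm (Xs hh k - xl t) \<le> norm (xe hh (t0 + real k * hh) - xe hh s) + norm (xe hh s - xe hh t) + norm (xe hh t - xl t)"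
            using xe_grid[OF hh(1), of k] norm_triangle_ineq[of "xe hh (t0 + real k * hh) - xe hh s" "xe hh s - xe hh t"]
              norm_triangle_ineq[of "xe hh (t0 + real k * hh) - xe hh t" "xe hh t - xl t"]
            by (simp add: algebra_simps)
          also have "\<dots> < Kd * hh + Kd * h + \<eta> / 4"
          proof -
            have a: "norm (xe hh (t0 + real k * hh) - xe hh s) \<le> Kd * hh"
            proof -
              have "norm (xe hh (t0 + real k * hh) - xe hh s) \<le> Kd * \<bar>t0 + real k * hh - s\<bar>"
                using xe_lip_n[OF sS tkS, of n] by (simp add: hh_def)
              also have "\<dots> \<le> Kd * hh" using k cst(6) by (intro mult_left_mono) (auto simp: algebra_simps)
              finally show ?thesis .
            qed
            have b: "norm (xe hh s - xe hh t) \<le> Kd * h"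
            proof -
              have "norm (xe hh s - xe hh t) \<le> Kd * \<bar>s - t\<bar>"
                using xe_lip_n[OF tS(1) sS, of n] by (simp add: hh_def)
              also have "\<dots> \<le> Kd * h" using s cst(6) by (intro mult_left_mono) auto
              finally show ?thesis .
            qed
            show ?thesis using a b close_t by linarith
          qed
          also have "\<dots> \<le> \<eta>"
          proof -
            have "Kd * hh \<le> Kd * \<rho>" "Kd * h \<le> Kd * \<rho>" using hhr h cst(6) by (auto intro: mult_left_mono)
            then show ?thesis using \<rho>(2) \<eta> by linarith
          qed
          finally have xk: "norm (Xs hh k - xl t) < \<eta>" .
          have "hn n < \<eta>" using hhr \<rho>(3) \<eta> by (simp add: hh_def)
          then show "Dv hh (idx hh s) (Xs hh (idx hh s)) \<in> K"
            using cond[of n k] k(1) tk xk by (simp add: hh_def k_def)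
        qed
        have "(xe hh (t + h) - xe hh t) /\<^sub>R (t + h - t) \<in> K"
          by (rule mvt_convex[of t "t + h" ?F "xe hh" "\<lambda>s. Dv hh (idx hh s) (Xs hh (idx hh s))" K])
             (use h cont inK dv K in auto)
        then show ?thesis by (simp add: hh_def n_def)
      qed
    qed
    then show ?thesis by (rule Lim_in_closed_set[OF K(1) _ _ tend]) simp
  qed
  show ?thesis
  proof (rule ccontr)
    assume "w \<notin> K"
    then obtain c \<beta> where c: "inner c w < \<beta>" and cK: "\<And>x. x \<in> K \<Longrightarrow> \<beta> < inner c x"
      using separating_hyperplane_closed_point[OF K(2) K(1)] by blast
    have "((\<lambda>y. inner c (xl y)) has_real_derivative inner c w) (at t)"
      using bounded_linear.has_vector_derivative[OF bounded_linear_inner_right der]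
      by (simp add: has_real_derivative_iff_has_vector_derivative)
    then obtain s where s: "0 < s" "\<And>h. h \<noteq> 0 \<Longrightarrow> norm (h - 0) < s \<Longrightarrow>
        norm ((inner c (xl (t + h)) - inner c (xl t)) / h - inner c w) < \<beta> - inner c w"
      unfolding DERIV_def LIM_eq using c by (metis diff_gt_0_iff_gt)
    define h where "h = min (s / 2) (min (\<rho> / 2) ((T - t) / 2))"
    have hle: "h \<le> (T - t) / 2" "h \<le> s / 2" "h \<le> \<rho> / 2" unfolding h_def by linarith+
    have h: "0 < h" "h < \<rho>" "t + h < T" "h < s" using s \<rho> t hle by (auto simp: h_def)
    have "(inner c (xl (t + h)) - inner c (xl t)) / h < \<beta>"
      using s(2)[of h] h by (auto simp: abs_less_iff)
    moreover have "\<beta> < inner c ((xl (t + h) - xl t) /\<^sub>R h)" by (rule cK[OF stepA[OF h(1-3)]])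
    moreover have "inner c ((xl (t + h) - xl t) /\<^sub>R h) = (inner c (xl (t + h)) - inner c (xl t)) / h"
      by (simp add: inner_diff_right divide_inverse mult.commute)
    ultimately show False by simp
  qed
qed

end

context ivp begin

lemma gf_close:
  assumes "0 < \<delta>"
  shows "\<exists>\<eta>>0. \<forall>U. dist U u < \<eta> \<longrightarrow> (\<forall>i\<in>{1..m}. norm (gf i U - gf i u) \<le> \<delta>)"
proof -
  have "\<forall>i\<in>{1..m}. eventually (\<lambda>U. dist (gf i U) (gf i u) < \<delta>) (at u)"
  proof
    fix i assume i: "i \<in> {1..m}"
    have "isCont (gf i) u" using gcont[OF i] by (simp add: continuous_on_eq_continuous_at)
    then have "(gf i \<longlongrightarrow> gf i u) (at u)" by (simp add: isCont_def)
    then show "eventually (\<lambda>U. dist (gf i U) (gf i u) < \<delta>) (at u)" using assms by (rule tendstoD)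
  qed
  then have "eventually (\<lambda>U. \<forall>i\<in>{1..m}. dist (gf i U) (gf i u) < \<delta>) (at u)"
    by (simp add: eventually_ball_finite_distrib)
  then obtain \<eta> where \<eta>: "\<eta> > 0" "\<And>U. U \<noteq> u \<Longrightarrow> dist U u < \<eta> \<Longrightarrow> \<forall>i\<in>{1..m}. dist (gf i U) (gf i u) < \<delta>"
    unfolding eventually_at by auto
  show ?thesis
  proof (intro exI[of _ \<eta>] conjI allI impI ballI)
    fix U i assume U: "dist U u < \<eta>" and i: "i \<in> {1..m}"
    show "norm (gf i U - gf i u) \<le> \<delta>"
    proof (cases "U = u")
      case True then show ?thesis using assms by simp
    next
      case False
      then have "dist (gf i U) (gf i u) < \<delta>" using \<eta>(2)[OF False U] i by blast
      then show ?thesis by (simp add: dist_norm)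
    qed
  qed (use \<eta> in auto)
qed

lemma scal_close:
  assumes t: "0 < t" and e: "0 < \<epsilon>"
  shows "\<exists>\<eta>>0. \<forall>s y. \<bar>s - t\<bar> < \<eta> \<longrightarrow> norm (y - v) < \<eta> \<longrightarrow> norm ((\<alpha> / s) *\<^sub>R y - (\<alpha> / t) *\<^sub>R v) < \<epsilon>"
proof -
  have "isCont (\<lambda>p. (\<alpha> / fst p) *\<^sub>R snd p) (t, v)"
    using t by (intro continuous_intros) auto
  then obtain d where d: "d > 0" "\<And>p. dist p (t, v) < d \<Longrightarrow> dist ((\<alpha> / fst p) *\<^sub>R snd p) ((\<alpha> / t) *\<^sub>R v) < \<epsilon>"
    unfolding continuous_at_eps_delta using e by fastforce
  show ?thesis
  proof (intro exI[of _ "d / 2"] conjI allI impI)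
    fix s y assume s: "\<bar>s - t\<bar> < d / 2" and y: "norm (y - v) < d / 2"
    have "dist (s, y) (t, v) = norm (s - t, y - v)" by (simp add: dist_norm)
    also have "\<dots> \<le> norm (s - t) + norm (y - v)" by (rule norm_Pair_le)
    also have "\<dots> < d" using s y by simp
    finally show "norm ((\<alpha> / s) *\<^sub>R y - (\<alpha> / t) *\<^sub>R v) < \<epsilon>" using d(2)[of "(s, y)"] by (simp add: dist_norm)
  qed (use d in auto)
qed

lemma Sset_props:
  fixes u :: 'a
  assumes "0 \<le> \<epsilon>"
  shows "closed {a + b |a b. a \<in> Cset m gf u \<and> b \<in> cball 0 \<epsilon>}" "convex {a + b |a b. a \<in> Cset m gf u \<and> b \<in> cball 0 \<epsilon>}"
proof -
  have eq: "{a + b |a b. a \<in> Cset m gf u \<and> b \<in> cball 0 \<epsilon>} = (\<Union>a\<in>Cset m gf u. \<Union>b\<in>cball 0 \<epsilon>. {a + b})" by blast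
  have "compact (\<Union>a\<in>Cset m gf u. \<Union>b\<in>cball 0 \<epsilon>. {a + b})"
    by (rule compact_sums'[OF Cset_compact compact_cball])
  then show "closed {a + b |a b. a \<in> Cset m gf u \<and> b \<in> cball 0 \<epsilon>}" unfolding eq by (rule compact_imp_closed)
  have "convex (\<Union>a\<in>Cset m gf u. \<Union>b\<in>cball 0 \<epsilon>. {a + b})"
    unfolding Cset_def by (rule convex_sums[OF convex_convex_hull convex_cball])
  then show "convex {a + b |a b. a \<in> Cset m gf u \<and> b \<in> cball 0 \<epsilon>}" unfolding eq .
qed

lemma norm_fst_le': "norm (fst z) \<le> norm z" and norm_snd_le': "norm (snd z) \<le> norm z"
  by (metis norm_fst_le prod.collapse) (metis norm_snd_le prod.collapse)

lemma kh_le: "k < Suc n \<Longrightarrow> real k * hn n \<le> \<tau>"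
proof -
  assume "k < Suc n"
  then have "real k * hn n \<le> real (Suc n) * hn n" using hn(1)[of n] by (intro mult_right_mono) auto
  then show ?thesis using hn(2)[of n] by simp
qed

lemma Dv_fst: "fst (Dv h k X) = snd X" and Dv_snd: "snd (Dv h k X) = - (\<alpha> / (t0 + real k * h)) *\<^sub>R snd X - gsel (fst X) (snd X)"
  by (simp_all add: Dv_def)

lemma gmap_mem:
  assumes r: "strict_mono (r :: nat \<Rightarrow> nat)"
    and conv: "\<And>e. 0 < e \<Longrightarrow> \<exists>N. \<forall>n x. n \<ge> N \<and> x \<in> {t0..T} \<longrightarrow> norm (xe (hn (r n)) x - xl x) < e"
    and t: "t0 < t" "t < T" and der: "(xl has_vector_derivative w) (at t)"
  shows "w \<in> Gmap \<alpha> m gf t (fst (xl t)) (snd (xl t))"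
proof -
  define u where "u = fst (xl t)"
  define v where "v = snd (xl t)"
  define c0 where "c0 = - ((\<alpha> / t) *\<^sub>R v)"
  define gh where "gh = c0 - snd w"
  note K = key[OF r conv t der]
  have tpos: "0 < t" using t t0 by simp
  have near: "dist (fst (Xs (hn n) k)) u \<le> norm (Xs (hn n) k - xl t)" "norm (snd (Xs (hn n) k) - v) \<le> norm (Xs (hn n) k - xl t)" for n k
  proof -
    have "fst (Xs (hn n) k) - u = fst (Xs (hn n) k - xl t)" "snd (Xs (hn n) k) - v = snd (Xs (hn n) k - xl t)"
      by (simp_all add: u_def v_def)
    then show "dist (fst (Xs (hn n) k)) u \<le> norm (Xs (hn n) k - xl t)" "norm (snd (Xs (hn n) k) - v) \<le> norm (Xs (hn n) k - xl t)"
      using norm_fst_le'[of "Xs (hn n) k - xl t"] norm_snd_le'[of "Xs (hn n) k - xl t"]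
      by (simp_all only: dist_norm)
  qed
  have fw: "fst w = v"
  proof -
    have "norm (fst w - v) \<le> 0 + \<epsilon>" if e: "0 < \<epsilon>" for \<epsilon>
    proof -
      have "w \<in> cball v \<epsilon> \<times> UNIV"
      proof (rule K)
        show "closed (cball v \<epsilon> \<times> (UNIV :: 'a set))" by (simp add: closed_Times)
        show "convex (cball v \<epsilon> \<times> (UNIV :: 'a set))" by (simp add: convex_Times)
        show "0 < \<epsilon>" by (rule e)
        fix n k assume "norm (Xs (hn n) k - xl t) < \<epsilon>"
        then have "norm (snd (Xs (hn n) k) - v) < \<epsilon>" using near(2)[of n k] by simp
        then have "fst (Dv (hn n) k (Xs (hn n) k)) \<in> cball v \<epsilon>"
          by (simp add: Dv_fst dist_norm norm_minus_commute)
        then show "Dv (hn n) k (Xs (hn n) k) \<in> cball v \<epsilon> \<times> UNIV"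
          by (simp add: mem_Times_iff)
      qed
      then show ?thesis by (cases w) (simp add: dist_norm norm_minus_commute)
    qed
    then have "norm (fst w - v) \<le> 0" by (rule field_le_epsilon)
    then show ?thesis by simp
  qed
  define S where "S e = {a + b |a b. a \<in> Cset m gf u \<and> b \<in> cball 0 e}" for e
  have ghS: "gh \<in> S \<epsilon>" if e: "0 < \<epsilon>" for \<epsilon>
  proof -
    obtain \<eta>1 where \<eta>1: "\<eta>1 > 0" "\<And>U. dist U u < \<eta>1 \<Longrightarrow> \<forall>i\<in>{1..m}. norm (gf i U - gf i u) \<le> \<epsilon> / 2"
      using gf_close[of "\<epsilon> / 2" u] e by auto
    obtain \<eta>2 where \<eta>2: "\<eta>2 > 0" "\<And>s y. \<bar>s - t\<bar> < \<eta>2 \<Longrightarrow> norm (y - v) < \<eta>2 \<Longrightarrow> norm ((\<alpha> / s) *\<^sub>R y - (\<alpha> / t) *\<^sub>R v) < \<epsilon> / 2"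
      using scal_close[OF tpos, of "\<epsilon> / 2" v] e by auto
    define Ky where "Ky = {y. c0 - y \<in> S \<epsilon>}"
    have "w \<in> UNIV \<times> Ky"
    proof (rule K[of _ "min \<eta>1 \<eta>2"])
      have "closed ((\<lambda>y. c0 - y) -` S \<epsilon>)"
        using Sset_props(1)[of \<epsilon> u] e by (intro continuous_closed_vimage) (auto simp: S_def intro!: continuous_intros)
      then show "closed (UNIV \<times> Ky)" by (simp add: closed_Times Ky_def vimage_def)
      have cS: "convex (S \<epsilon>)" using Sset_props(2)[of \<epsilon> u] e by (simp add: S_def)
      have "convex Ky" unfolding convex_def Ky_def
      proof (intro ballI allI impI, simp only: mem_Collect_eq)
        fix x y and a b :: real assume xy: "c0 - x \<in> S \<epsilon>" "c0 - y \<in> S \<epsilon>" and ab: "0 \<le> a" "0 \<le> b" "a + b = 1"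
        have "c0 - (a *\<^sub>R x + b *\<^sub>R y) = a *\<^sub>R (c0 - x) + b *\<^sub>R (c0 - y)"
          using ab by (simp add: algebra_simps flip: scaleR_add_left)
        also have "\<dots> \<in> S \<epsilon>" using cS xy ab unfolding convex_def by blast
        finally show "c0 - (a *\<^sub>R x + b *\<^sub>R y) \<in> S \<epsilon>" .
      qed
      then show "convex (UNIV \<times> Ky)" by (simp add: convex_Times)
      show "0 < min \<eta>1 \<eta>2" using \<eta>1 \<eta>2 by simp
      fix n k assume tk: "\<bar>t0 + real k * hn n - t\<bar> < min \<eta>1 \<eta>2" and xk: "norm (Xs (hn n) k - xl t) < min \<eta>1 \<eta>2"
      define U where "U = fst (Xs (hn n) k)"
      define V where "V = snd (Xs (hn n) k)"
      define tk' where "tk' = t0 + real k * hn n"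
      have dU: "dist U u < \<eta>1" using near(1)[of n k] xk by (simp add: U_def)
      have dV: "norm (V - v) < \<eta>2" using near(2)[of n k] xk by (simp add: V_def)
      have gC: "gsel U V \<in> S (\<epsilon> / 2)"
        using Cset_hausdorff[of m gf U u "\<epsilon> / 2"] \<eta>1(2)[OF dU] gsel(1)[of U V] by (auto simp: S_def)
      then obtain a b where ab: "a \<in> Cset m gf u" "norm b \<le> \<epsilon> / 2" "gsel U V = a + b" by (auto simp: S_def)
      have ek: "norm ((\<alpha> / tk') *\<^sub>R V - (\<alpha> / t) *\<^sub>R v) < \<epsilon> / 2"
        using \<eta>2(2)[of tk' V] tk dV by (simp add: tk'_def)
      have "c0 - snd (Dv (hn n) k (Xs (hn n) k)) = a + (b + ((\<alpha> / tk') *\<^sub>R V - (\<alpha> / t) *\<^sub>R v))"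
        by (simp add: Dv_snd c0_def ab(3) U_def[symmetric] V_def[symmetric] tk'_def[symmetric] algebra_simps)
      moreover have "norm (b + ((\<alpha> / tk') *\<^sub>R V - (\<alpha> / t) *\<^sub>R v)) \<le> \<epsilon>"
        using norm_triangle_ineq[of b "(\<alpha> / tk') *\<^sub>R V - (\<alpha> / t) *\<^sub>R v"] ab(2) ek by linarith
      ultimately have "c0 - snd (Dv (hn n) k (Xs (hn n) k)) \<in> S \<epsilon>"
        using ab(1) unfolding S_def by (auto simp: dist_norm)
      then show "Dv (hn n) k (Xs (hn n) k) \<in> UNIV \<times> Ky" by (cases "Dv (hn n) k (Xs (hn n) k)") (simp add: Ky_def)
    qed
    then show ?thesis by (cases w) (simp add: Ky_def gh_def)
  qed
  have ghC: "gh \<in> Cset m gf u"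
  proof -
    have "\<exists>y\<in>Cset m gf u. dist y gh < e" if e: "0 < e" for e
    proof -
      obtain a b where "a \<in> Cset m gf u" "norm b \<le> e / 2" "gh = a + b"
        using ghS[of "e / 2"] e by (auto simp: S_def)
      then show ?thesis using e by (intro bexI[of _ a]) (auto simp: dist_norm)
    qed
    then show ?thesis using closed_approachable[OF compact_imp_closed[OF Cset_compact]] by blast
  qed
  have opt: "0 \<le> (gh - c) \<bullet> v" if c: "c \<in> Cset m gf u" for c
  proof -
    have "- \<epsilon> \<le> (gh - c) \<bullet> v" if e: "0 < \<epsilon>" for \<epsilon>
    proof -
      define \<delta> where "\<delta> = \<epsilon> / (3 * (norm v + 1))"
      have \<delta>: "0 < \<delta>" "\<delta> * norm v \<le> \<epsilon> / 3"
      proof -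
        show "0 < \<delta>" using e by (simp add: \<delta>_def add_nonneg_pos)
        have "norm v / (norm v + 1) \<le> 1" by (simp add: add_nonneg_pos)
        then have "\<epsilon> / 3 * (norm v / (norm v + 1)) \<le> \<epsilon> / 3 * 1" using e by (intro mult_left_mono) auto
        then show "\<delta> * norm v \<le> \<epsilon> / 3" by (simp add: \<delta>_def)
      qed
      define \<eta>3 where "\<eta>3 = \<epsilon> / (3 * (2 * M + 1))"
      have \<eta>3: "0 < \<eta>3" "2 * M * \<eta>3 \<le> \<epsilon> / 3"
      proof -
        show "0 < \<eta>3" using e M(1) by (simp add: \<eta>3_def)
        have "2 * M / (2 * M + 1) \<le> 1" using M(1) by simp
        then have "\<epsilon> / 3 * (2 * M / (2 * M + 1)) \<le> \<epsilon> / 3 * 1" using e by (intro mult_left_mono) auto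
        then show "2 * M * \<eta>3 \<le> \<epsilon> / 3" by (simp add: \<eta>3_def mult.commute)
      qed
      obtain \<eta>1 where \<eta>1: "\<eta>1 > 0" "\<And>U. dist U u < \<eta>1 \<Longrightarrow> \<forall>i\<in>{1..m}. norm (gf i U - gf i u) \<le> \<delta>"
        using gf_close[of \<delta> u] \<delta> by auto
      obtain \<eta>2 where \<eta>2: "\<eta>2 > 0" "\<And>s y. \<bar>s - t\<bar> < \<eta>2 \<Longrightarrow> norm (y - v) < \<eta>2 \<Longrightarrow> norm ((\<alpha> / s) *\<^sub>R y - (\<alpha> / t) *\<^sub>R v) < \<delta>"
        using scal_close[OF tpos, of \<delta> v] \<delta> by auto
      define Ky where "Ky = {y. v \<bullet> y \<le> (c0 - c) \<bullet> v + \<epsilon>}"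
      have "w \<in> UNIV \<times> Ky"
      proof (rule K[of _ "min \<eta>1 (min \<eta>2 \<eta>3)"])
        show "closed (UNIV \<times> Ky)" unfolding Ky_def by (intro closed_Times closed_halfspace_le) simp
        show "convex (UNIV \<times> Ky)" unfolding Ky_def by (intro convex_Times convex_halfspace_le) simp
        show "0 < min \<eta>1 (min \<eta>2 \<eta>3)" using \<eta>1 \<eta>2 \<eta>3 by simp
        fix n k assume kn: "k < Suc n" and tk: "\<bar>t0 + real k * hn n - t\<bar> < min \<eta>1 (min \<eta>2 \<eta>3)"
          and xk: "norm (Xs (hn n) k - xl t) < min \<eta>1 (min \<eta>2 \<eta>3)"
        define U where "U = fst (Xs (hn n) k)"
        define V where "V = snd (Xs (hn n) k)"
        define tk' where "tk' = t0 + real k * hn n"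
        define g where "g = gsel U V"
        define ek where "ek = (\<alpha> / tk') *\<^sub>R V - (\<alpha> / t) *\<^sub>R v"
        have dU: "dist U u < \<eta>1" using near(1)[of n k] xk by (simp add: U_def)
        have dV: "norm (V - v) < \<eta>2" "norm (V - v) < \<eta>3" using near(2)[of n k] xk by (simp_all add: V_def)
        have Uc: "U \<in> cball u0 1" using Dv_bound(2)[OF hn(1) kh_le[OF kn]] by (simp add: U_def)
        have gC: "g \<in> Cset m gf U" by (simp add: g_def gsel(1))
        have gopt: "g \<bullet> (- V) \<le> h \<bullet> (- V)" if "h \<in> Cset m gf U" for h using gsel(2)[OF that] by (simp add: g_def)
        have "c \<in> {a + b |a b. a \<in> Cset m gf U \<and> b \<in> cball 0 \<delta>}"
          using Cset_hausdorff[of m gf u U \<delta>] \<eta>1(2)[OF dU] c by (auto simp: norm_minus_commute)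
        then obtain ck b where ck: "ck \<in> Cset m gf U" "norm b \<le> \<delta>" "c = ck + b" by auto
        have gM: "norm g \<le> M" "norm ck \<le> M" using C_bound[OF Uc gC] C_bound[OF Uc ck(1)] by auto
        have ekb: "norm ek < \<delta>" using \<eta>2(2)[of tk' V] tk dV by (simp add: tk'_def ek_def)
        have t1: "0 \<le> (g - ck) \<bullet> V" using gopt[OF ck(1)] by (simp add: inner_diff_left)
        have t2: "\<bar>(g - ck) \<bullet> (v - V)\<bar> \<le> \<epsilon> / 3"
        proof -
          have "\<bar>(g - ck) \<bullet> (v - V)\<bar> \<le> norm (g - ck) * norm (v - V)" by (rule Cauchy_Schwarz_ineq2)
          also have "\<dots> \<le> (2 * M) * \<eta>3"
          proof (rule mult_mono)
            show "norm (g - ck) \<le> 2 * M" using norm_triangle_ineq4[of g ck] gM by linarith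
            show "norm (v - V) \<le> \<eta>3" using dV(2) by (simp add: norm_minus_commute)
          qed (use M(1) in auto)
          also have "\<dots> \<le> \<epsilon> / 3" using \<eta>3(2) by simp
          finally show ?thesis .
        qed
        have t3: "\<bar>b \<bullet> v\<bar> \<le> \<epsilon> / 3"
        proof -
          have "\<bar>b \<bullet> v\<bar> \<le> norm b * norm v" by (rule Cauchy_Schwarz_ineq2)
          also have "\<dots> \<le> \<delta> * norm v" using ck(2) by (simp add: mult_right_mono)
          finally show ?thesis using \<delta>(2) by simp
        qed
        have t4: "\<bar>ek \<bullet> v\<bar> \<le> \<epsilon> / 3"
        proof -
          have "\<bar>ek \<bullet> v\<bar> \<le> norm ek * norm v" by (rule Cauchy_Schwarz_ineq2)
          also have "\<dots> \<le> \<delta> * norm v" using ekb by (simp add: mult_right_mono)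
          finally show ?thesis using \<delta>(2) by simp
        qed
        have eq: "(c0 - c) \<bullet> v - v \<bullet> snd (Dv (hn n) k (Xs (hn n) k))
            = (g - ck) \<bullet> V + (g - ck) \<bullet> (v - V) - b \<bullet> v + ek \<bullet> v"
          by (simp add: Dv_snd c0_def ck(3) g_def ek_def U_def[symmetric] V_def[symmetric] tk'_def[symmetric]
              inner_diff_left inner_diff_right inner_add_left inner_add_right inner_commute algebra_simps)
        have "v \<bullet> snd (Dv (hn n) k (Xs (hn n) k)) \<le> (c0 - c) \<bullet> v + \<epsilon>"
          using eq t1 t2 t3 t4 by (simp add: abs_le_iff)
        then show "Dv (hn n) k (Xs (hn n) k) \<in> UNIV \<times> Ky" by (simp add: Ky_def mem_Times_iff)
      qed
      then have "v \<bullet> snd w \<le> (c0 - c) \<bullet> v + \<epsilon>" by (simp add: Ky_def mem_Times_iff)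
      then show ?thesis by (simp add: gh_def inner_diff_left inner_diff_right inner_commute)
    qed
    then have H: "\<And>e. 0 < e \<Longrightarrow> - e \<le> (gh - c) \<bullet> v" by blast
    show ?thesis
    proof (rule field_le_epsilon)
      fix e :: real assume "0 < e"
      then show "0 \<le> (gh - c) \<bullet> v + e" using H[of e] by linarith
    qed
  qed
  have "gh \<in> argmin_set (Cset m gf u) (\<lambda>g. g \<bullet> (- v))"
    unfolding argmin_set_def using ghC opt by (auto simp: inner_diff_left)
  moreover have "w = (v, - ((\<alpha> / t) *\<^sub>R v) - gh)"
    using fw by (cases w) (simp add: gh_def c0_def)
  ultimately show ?thesis unfolding Gmap_def u_def[symmetric] v_def[symmetric] by blast
qed

end

context ivp begin

lemma main:
  "\<exists>T > t0. \<exists>u v :: real \<Rightarrow> 'a.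
           abs_continuous_on t0 T (\<lambda>t. (u t, v t)) \<and>
           (AE t in lebesgue. t \<in> {t0<..T} \<longrightarrow>
              (\<exists>w. ((\<lambda>s. (u s, v s)) has_vector_derivative w) (at t) \<and>
                   w \<in> Gmap \<alpha> m gf t (u t) (v t))) \<and>
           u t0 = u0 \<and> v t0 = v0"
proof -
  obtain xl r where xl: "continuous_on {t0..T} xl" "strict_mono (r :: nat \<Rightarrow> nat)"
    and conv: "\<And>e. 0 < e \<Longrightarrow> \<exists>N. \<forall>n x. n \<ge> N \<and> x \<in> {t0..T} \<longrightarrow> norm (xe (hn (r n)) x - xl x) < e"
    by (rule arzela) blast
  have TT: "t0 < T" using cst(3) by (simp add: T_def)
  have lip: "norm (xl s - xl t) \<le> Kd * \<bar>s - t\<bar>" if st: "s \<in> {t0..T}" "t \<in> {t0..T}" for s t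
  proof (rule field_le_epsilon)
    fix e :: real assume e: "0 < e"
    obtain N where N: "\<And>n x. n \<ge> N \<Longrightarrow> x \<in> {t0..T} \<Longrightarrow> norm (xe (hn (r n)) x - xl x) < e / 2"
      using conv[of "e / 2"] e by auto
    have "norm (xl s - xl t) \<le> norm (xe (hn (r N)) s - xl s) + norm (xe (hn (r N)) s - xe (hn (r N)) t) + norm (xe (hn (r N)) t - xl t)"
    proof -
      let ?a = "xe (hn (r N)) s" and ?b = "xe (hn (r N)) t"
      have "xl s - xl t = (xl s - ?a) + ((?a - ?b) + (?b - xl t))" by simp
      then have "norm (xl s - xl t) \<le> norm (xl s - ?a) + norm ((?a - ?b) + (?b - xl t))"
        by (metis norm_triangle_ineq)
      also have "norm ((?a - ?b) + (?b - xl t)) \<le> norm (?a - ?b) + norm (?b - xl t)" by (rule norm_triangle_ineq)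
      finally show ?thesis by (simp add: norm_minus_commute)
    qed
    also have "\<dots> \<le> e / 2 + Kd * \<bar>s - t\<bar> + e / 2"
      using N[OF order_refl st(1)] N[OF order_refl st(2)] xe_lip_n[OF st(2) st(1), of "r N"] by linarith
    finally show "norm (xl s - xl t) \<le> Kd * \<bar>s - t\<bar> + e" by simp
  qed
  have init: "xl t0 = (u0, v0)"
  proof -
    have "norm (xl t0 - (u0, v0)) \<le> 0 + e" if e: "0 < e" for e
    proof -
      obtain N where N: "\<And>n x. n \<ge> N \<Longrightarrow> x \<in> {t0..T} \<Longrightarrow> norm (xe (hn (r n)) x - xl x) < e"
        using conv[of e] e by auto
      have "norm (xe (hn (r N)) t0 - xl t0) < e" using N[of N t0] TT by simp
      then show ?thesis using xe_t0 by (simp add: norm_minus_commute)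
    qed
    then have "norm (xl t0 - (u0, v0)) \<le> 0" by (rule field_le_epsilon)
    then show ?thesis by simp
  qed
  define u where "u t = fst (xl t)" for t
  define v where "v t = snd (xl t)" for t
  have uv: "(\<lambda>t. (u t, v t)) = xl" by (simp add: u_def v_def)
  have claim: "(\<Sum>k<n. norm (xl (t k) - xl (s k))) < \<epsilon>"
    if H: "\<forall>k<n. t0 \<le> s k \<and> s k \<le> t k \<and> t k \<le> T" "(\<Sum>k<n. t k - s k) < \<epsilon> / (Kd + 1)" and e: "0 < \<epsilon>"
    for n :: nat and s t :: "nat \<Rightarrow> real" and \<epsilon> :: real
  proof -
    have "(\<Sum>k<n. norm (xl (t k) - xl (s k))) \<le> (\<Sum>k<n. Kd * (t k - s k))"
    proof (rule sum_mono)
      fix k assume "k \<in> {..<n}"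
      then have k: "t0 \<le> s k" "s k \<le> t k" "t k \<le> T" using H by auto
      then show "norm (xl (t k) - xl (s k)) \<le> Kd * (t k - s k)" using lip[of "t k" "s k"] by simp
    qed
    also have "\<dots> = Kd * (\<Sum>k<n. t k - s k)" by (simp add: sum_distrib_left)
    also have "\<dots> \<le> Kd * (\<epsilon> / (Kd + 1))" using H cst(6) by (intro mult_left_mono) auto
    also have "\<dots> < \<epsilon>" using e cst(6) by (simp add: field_simps)
    finally show ?thesis .
  qed
  have ac: "abs_continuous_on t0 T xl"
    unfolding abs_continuous_on_def
    apply (intro allI impI)
    subgoal for \<epsilon>
      apply (rule exI[of _ "\<epsilon> / (Kd + 1)"])
      apply (intro conjI allI impI)
       apply (use cst(6) in simp)
      apply (elim conjE)
      apply (rule claim)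
        apply assumption+
      done
    done
  have neg: "negligible {t \<in> {t0<..<T}. \<not> xl differentiable (at t)}"
    by (rule lipschitz_ae_diff[OF _ TT cst(6)]) (use lip in auto)
  have "negligible ({t \<in> {t0<..<T}. \<not> xl differentiable (at t)} \<union> {T})" using neg by simp
  then have nul: "{t \<in> {t0<..<T}. \<not> xl differentiable (at t)} \<union> {T} \<in> null_sets lebesgue"
    by (simp add: negligible_iff_null_sets)
  have ae: "AE t in lebesgue. t \<in> {t0<..T} \<longrightarrow>
              (\<exists>w. (xl has_vector_derivative w) (at t) \<and> w \<in> Gmap \<alpha> m gf t (fst (xl t)) (snd (xl t)))"
  proof (rule AE_I'[OF nul], rule subsetI)
    fix t assume tin: "t \<in> {t \<in> space lebesgue. \<not> (t \<in> {t0<..T} \<longrightarrow>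
              (\<exists>w. (xl has_vector_derivative w) (at t) \<and> w \<in> Gmap \<alpha> m gf t (fst (xl t)) (snd (xl t))))}"
    show "t \<in> {t \<in> {t0<..<T}. \<not> xl differentiable (at t)} \<union> {T}"
    proof (rule ccontr)
      assume nn: "t \<notin> {t \<in> {t0<..<T}. \<not> xl differentiable (at t)} \<union> {T}"
      have t: "t \<in> {t0<..T}" using tin by blast
      have t': "t0 < t" "t < T" using t nn by auto
      then have "xl differentiable (at t)" using nn by auto
      then have d: "(xl has_vector_derivative vector_derivative xl (at t)) (at t)"
        by (simp add: vector_derivative_works[symmetric])
      have "vector_derivative xl (at t) \<in> Gmap \<alpha> m gf t (fst (xl t)) (snd (xl t))"
        by (rule gmap_mem[OF xl(2) conv t' d])
      with d have "\<exists>w. (xl has_vector_derivative w) (at t) \<and> w \<in> Gmap \<alpha> m gf t (fst (xl t)) (snd (xl t))" by blast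
      then show False using tin by blast
    qed
  qed
  show ?thesis
    using TT ac ae init by (intro exI[of _ T] conjI exI[of _ u] exI[of _ v]) (auto simp: uv u_def v_def)
qed

end

theorem theorem3p4:
  fixes f :: "nat \<Rightarrow> 'a::euclidean_space \<Rightarrow> real"
    and gf :: "nat \<Rightarrow> 'a \<Rightarrow> 'a"
    and m :: nat and \<alpha> t0 :: real and u0 v0 :: 'a
  assumes m: "m \<ge> 1"
    and convex: "\<And>i. i \<in> {1..m} \<Longrightarrow> convex_on UNIV (f i)"
    and grad: "\<And>i x. i \<in> {1..m} \<Longrightarrow> (f i has_derivative (\<lambda>h. gf i x \<bullet> h)) (at x)"
    and grad_cont: "\<And>i. i \<in> {1..m} \<Longrightarrow> continuous_on UNIV (gf i)"
    and grad_lip: "\<And>i. i \<in> {1..m} \<Longrightarrow> \<exists>L. L-lipschitz_on UNIV (gf i)"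
    and \<alpha>: "\<alpha> > 0" and t0: "t0 > 0"
  shows "\<exists>T > t0. \<exists>u v :: real \<Rightarrow> 'a.
           abs_continuous_on t0 T (\<lambda>t. (u t, v t)) \<and>
           (AE t in lebesgue. t \<in> {t0<..T} \<longrightarrow>
              (\<exists>w. ((\<lambda>s. (u s, v s)) has_vector_derivative w) (at t) \<and>
                   w \<in> Gmap \<alpha> m gf t (u t) (v t))) \<and>
           u t0 = u0 \<and> v t0 = v0"
proof -
  interpret ivp m gf \<alpha> t0 u0 v0
    using m grad_cont \<alpha> t0 by unfold_locales auto
  show ?thesis by (rule main)
qed

end
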